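(* Let $\lambda\in P_I^+$ and $\mu\in P$ with $\mu<_\emptyset\lambda$. Then $w\mu<_\emptyset\lambda$ for every $w\in W_{I,\lambda}$.
   Context: Let $\mathfrak a$ be a Euclidean space with inner product $(\cdot,\cdot)$, $R\subset\mathfrak a^*$ a root system with Weyl group $W$, positive roots $R^+$, simple roots $\Pi$, simple reflections $S$, and Bruhat order $\le_W$ on $W$. Let $P$ be the weight lattice, $P^+$ the dominant weights, and $Q^+=\{\sum_{\alpha\in\Pi}n_\alpha\alpha: n_\alpha\in\mathbb Z_{\ge0}\}$; write $\lambda\preceq\mu$ iff $\mu-\lambda\in Q^+$. For $\lambda\in P$ let $\lambda_+$ be the unique element of $W\lambda\cap P^+$ and $\overline v(\lambda)$ the minimal length element of $W$ with $\overline v(\lambda)\lambda_+=\lambda$. Define a partial order on $P$: $\lambda\le_\emptyset\mu$ iff $\lambda_+\preceq\mu_+$ and, in case $\lambda_+=\mu_+$, $\overline v(\lambda)\le_W\overline v(\mu)$; $\lambda<_\emptyset\mu$ means $\lambda\le_\emptyset\mu$ and $\lambda\neq\mu$. Let $I\subset S$, $W_I$ the parabolic subgroup generated by $I$, $R_I^+$ its positive roots, $P_I^+=\{\lambda\in P:(\lambda,\alpha)\ge0\ \forall\alpha\in R_I^+\}$, and for $\lambda\in P_I^+$ let $W_{I,\lambda}=\{w\in W_I: w\lambda=\lambda\}$. *)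

theory Defs
  imports "HOL-Analysis.Analysis"
begin

text \<open>The Euclidean space \<open>\<frak>a\<close> is a type of class euclidean_space; its dual is identified
with it via the inner product. Elements of W are functions on this type.\<close>

definition srefl :: "'a::euclidean_space \<Rightarrow> 'a \<Rightarrow> 'a" where
  "srefl \<alpha> x = x - (2 * (x \<bullet> \<alpha>) / (\<alpha> \<bullet> \<alpha>)) *\<^sub>R \<alpha>"

definition root_system :: "'a::euclidean_space set \<Rightarrow> bool" where
  "root_system R \<longleftrightarrow> finite R \<and> 0 \<notin> R \<and> span R = UNIV \<and>
     (\<forall>\<alpha>\<in>R. \<forall>\<beta>\<in>R. srefl \<alpha> \<beta> \<in> R \<and> 2 * (\<beta> \<bullet> \<alpha>) / (\<alpha> \<bullet> \<alpha>) \<in> \<int>)"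

definition is_base :: "'a::euclidean_space set \<Rightarrow> 'a set \<Rightarrow> bool" where
  "is_base R B \<longleftrightarrow> B \<subseteq> R \<and> independent B \<and>
     (\<forall>\<beta>\<in>R. \<exists>c::'a \<Rightarrow> int. \<beta> = (\<Sum>\<alpha>\<in>B. real_of_int (c \<alpha>) *\<^sub>R \<alpha>) \<and>
        ((\<forall>\<alpha>\<in>B. c \<alpha> \<ge> 0) \<or> (\<forall>\<alpha>\<in>B. c \<alpha> \<le> 0)))"

definition Qplus :: "'a::euclidean_space set \<Rightarrow> 'a set" where
  "Qplus B = {x. \<exists>n::'a \<Rightarrow> nat. x = (\<Sum>\<alpha>\<in>B. real (n \<alpha>) *\<^sub>R \<alpha>)}"

definition pos_roots :: "'a::euclidean_space set \<Rightarrow> 'a set \<Rightarrow> 'a set" where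
  "pos_roots R B = R \<inter> Qplus B"

definition dom_le :: "'a::euclidean_space set \<Rightarrow> 'a \<Rightarrow> 'a \<Rightarrow> bool" where
  "dom_le B lam \<mu> \<longleftrightarrow> \<mu> - lam \<in> Qplus B"

definition weights :: "'a::euclidean_space set \<Rightarrow> 'a set" where
  "weights R = {lam. \<forall>\<alpha>\<in>R. 2 * (lam \<bullet> \<alpha>) / (\<alpha> \<bullet> \<alpha>) \<in> \<int>}"

definition dom_weights :: "'a::euclidean_space set \<Rightarrow> 'a set \<Rightarrow> 'a set" where
  "dom_weights R B = {lam\<in>weights R. \<forall>\<alpha>\<in>pos_roots R B. lam \<bullet> \<alpha> \<ge> 0}"

inductive_set gen_group :: "('a \<Rightarrow> 'a) set \<Rightarrow> ('a \<Rightarrow> 'a) set" for G where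
  gen_id: "id \<in> gen_group G"
| gen_step: "s \<in> G \<Longrightarrow> w \<in> gen_group G \<Longrightarrow> s \<circ> w \<in> gen_group G"

definition weyl :: "'a::euclidean_space set \<Rightarrow> ('a \<Rightarrow> 'a) set" where
  "weyl R = gen_group (srefl ` R)"

definition simple_refls :: "'a::euclidean_space set \<Rightarrow> ('a \<Rightarrow> 'a) set" where
  "simple_refls B = srefl ` B"

definition wlen :: "'a::euclidean_space set \<Rightarrow> ('a \<Rightarrow> 'a) \<Rightarrow> nat" where
  "wlen B w = (LEAST n. \<exists>ss. length ss = n \<and> set ss \<subseteq> simple_refls B \<and> w = foldr (\<circ>) ss id)"

definition bruhat_step :: "'a::euclidean_space set \<Rightarrow> 'a set \<Rightarrow> ('a \<Rightarrow> 'a) \<Rightarrow> ('a \<Rightarrow> 'a) \<Rightarrow> bool" where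
  "bruhat_step R B u w \<longleftrightarrow> (\<exists>\<alpha>\<in>R. w = srefl \<alpha> \<circ> u) \<and> wlen B u < wlen B w"

definition bruhat_le :: "'a::euclidean_space set \<Rightarrow> 'a set \<Rightarrow> ('a \<Rightarrow> 'a) \<Rightarrow> ('a \<Rightarrow> 'a) \<Rightarrow> bool" where
  "bruhat_le R B u w \<longleftrightarrow> u \<in> weyl R \<and> w \<in> weyl R \<and> (bruhat_step R B)\<^sup>*\<^sup>* u w"

definition dom_rep :: "'a::euclidean_space set \<Rightarrow> 'a set \<Rightarrow> 'a \<Rightarrow> 'a" where
  "dom_rep R B lam = (THE \<nu>. \<nu> \<in> (\<lambda>w. w lam) ` weyl R \<and> \<nu> \<in> dom_weights R B)"

definition vbar :: "'a::euclidean_space set \<Rightarrow> 'a set \<Rightarrow> 'a \<Rightarrow> ('a \<Rightarrow> 'a)" where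
  "vbar R B lam = (THE w. w \<in> weyl R \<and> w (dom_rep R B lam) = lam \<and>
      (\<forall>w'\<in>weyl R. w' (dom_rep R B lam) = lam \<longrightarrow> wlen B w \<le> wlen B w'))"

definition le_empty :: "'a::euclidean_space set \<Rightarrow> 'a set \<Rightarrow> 'a \<Rightarrow> 'a \<Rightarrow> bool" where
  "le_empty R B lam \<mu> \<longleftrightarrow> dom_le B (dom_rep R B lam) (dom_rep R B \<mu>) \<and>
     (dom_rep R B lam = dom_rep R B \<mu> \<longrightarrow> bruhat_le R B (vbar R B lam) (vbar R B \<mu>))"

definition less_empty :: "'a::euclidean_space set \<Rightarrow> 'a set \<Rightarrow> 'a \<Rightarrow> 'a \<Rightarrow> bool" where
  "less_empty R B lam \<mu> \<longleftrightarrow> le_empty R B lam \<mu> \<and> lam \<noteq> \<mu>"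

definition par_simple :: "'a::euclidean_space set \<Rightarrow> ('a \<Rightarrow> 'a) set \<Rightarrow> 'a set" where
  "par_simple B I = {\<alpha>\<in>B. srefl \<alpha> \<in> I}"

definition par_pos_roots :: "'a::euclidean_space set \<Rightarrow> 'a set \<Rightarrow> ('a \<Rightarrow> 'a) set \<Rightarrow> 'a set" where
  "par_pos_roots R B I = pos_roots R B \<inter> span (par_simple B I)"

definition par_dom_weights :: "'a::euclidean_space set \<Rightarrow> 'a set \<Rightarrow> ('a \<Rightarrow> 'a) set \<Rightarrow> 'a set" where
  "par_dom_weights R B I = {lam\<in>weights R. \<forall>\<alpha>\<in>par_pos_roots R B I. lam \<bullet> \<alpha> \<ge> 0}"

definition par_stab :: "('a \<Rightarrow> 'a) set \<Rightarrow> 'a \<Rightarrow> ('a \<Rightarrow> 'a) set" where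
  "par_stab I lam = {w\<in>gen_group I. w lam = lam}"

end

theory Submission
  imports Defs
begin

section \<open>Reflections\<close>

lemma srefl_linear: "linear (srefl a)"
  unfolding srefl_def by (auto intro!: linearI simp: algebra_simps inner_add_left add_divide_distrib scaleR_add_left[symmetric] simp del: scaleR_add_left)

lemma srefl_add: "srefl a (x + y) = srefl a x + srefl a y"
  using srefl_linear linear_add by blast
lemma srefl_scale: "srefl a (c *\<^sub>R x) = c *\<^sub>R srefl a x"
  using srefl_linear linear_scale by blast

lemma srefl_self: "a \<noteq> 0 \<Longrightarrow> srefl a a = - a"
  by (simp add: srefl_def algebra_simps scaleR_2)

lemma srefl_orth: "x \<bullet> a = 0 \<Longrightarrow> srefl a x = x"
  by (simp add: srefl_def)

lemma srefl_inner_self: "a \<noteq> 0 \<Longrightarrow> srefl a x \<bullet> a = - (x \<bullet> a)"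
  by (simp add: srefl_def inner_diff_left algebra_simps)

lemma srefl_invol: "a \<noteq> 0 \<Longrightarrow> srefl a (srefl a x) = x"
proof -
  assume a: "a \<noteq> 0"
  have "srefl a (srefl a x) = srefl a x - (2 * (srefl a x \<bullet> a) / (a \<bullet> a)) *\<^sub>R a"
    by (simp add: srefl_def)
  also have "\<dots> = x" using a by (simp add: srefl_inner_self) (simp add: srefl_def)
  finally show ?thesis .
qed

lemma srefl_comp_self: "a \<noteq> 0 \<Longrightarrow> srefl a \<circ> srefl a = id"
  by (auto simp: srefl_invol)

lemma srefl_sym: "srefl a x \<bullet> y = x \<bullet> srefl a y"
  by (simp add: srefl_def inner_diff_left inner_diff_right algebra_simps inner_commute)

lemma srefl_inner: "a \<noteq> 0 \<Longrightarrow> srefl a x \<bullet> srefl a y = x \<bullet> y"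
  by (simp add: srefl_sym srefl_invol)

lemma srefl_scaleR_root: "c \<noteq> 0 \<Longrightarrow> srefl (c *\<^sub>R a) = srefl a"
proof
  fix x assume c: "c \<noteq> 0"
  have "(2 * (x \<bullet> (c *\<^sub>R a)) / (c *\<^sub>R a \<bullet> c *\<^sub>R a)) *\<^sub>R (c *\<^sub>R a) = (2 * (x \<bullet> a) / (a \<bullet> a)) *\<^sub>R a"
    using c by (cases "a = 0") (simp_all add: field_simps power2_eq_square)
  then show "srefl (c *\<^sub>R a) x = srefl a x" by (simp add: srefl_def)
qed

definition orth :: "('a::euclidean_space \<Rightarrow> 'a) \<Rightarrow> bool" where
  "orth f \<longleftrightarrow> linear f \<and> (\<forall>x y. f x \<bullet> f y = x \<bullet> y)"

lemma orth_srefl: "a \<noteq> 0 \<Longrightarrow> orth (srefl a)"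
  by (simp add: orth_def srefl_linear srefl_inner)

lemma orth_comp: "orth f \<Longrightarrow> orth g \<Longrightarrow> orth (f \<circ> g)"
  by (auto simp: orth_def linear_compose)

lemma orth_id: "orth id"
  by (simp add: orth_def linear_iff)

lemma srefl_conj:
  assumes "orth f" shows "f (srefl a x) = srefl (f a) (f x)"
proof -
  have l: "linear f" and i: "\<And>x y. f x \<bullet> f y = x \<bullet> y" using assms by (auto simp: orth_def)
  show ?thesis unfolding srefl_def using l
    by (simp add: linear_diff linear_scale i)
qed

lemma srefl_conj_fun: "orth f \<Longrightarrow> f \<circ> srefl a = srefl (f a) \<circ> f"
  by (auto simp: srefl_conj)

lemma orth_inj: "orth f \<Longrightarrow> inj f"
proof (rule injI)
  fix x y assume o: "orth f" and e: "f x = f y"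
  have l: "linear f" and i: "\<And>x y. f x \<bullet> f y = x \<bullet> y" using o by (auto simp: orth_def)
  have "f (x - y) = 0" using e l by (simp add: linear_diff)
  then have "(x - y) \<bullet> (x - y) = 0" using i[of "x-y" "x-y"] by simp
  then show "x = y" by simp
qed

lemma orth_norm: "orth f \<Longrightarrow> norm (f x) = norm x"
  by (simp add: orth_def norm_eq_sqrt_inner)

lemma orth_neg: "orth f \<Longrightarrow> f (- x) = - f x"
  by (simp add: orth_def linear_neg)


lemma exists_dual_vector:
  fixes B :: "'a::euclidean_space set"
  assumes "independent B"
  shows "\<exists>v. \<forall>b\<in>B. v \<bullet> b = f b"
proof -
  obtain g :: "'a \<Rightarrow> real" where g: "linear g" "\<forall>x\<in>B. g x = f x"
    using real_vector.linear_independent_extend[OF assms] by blast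
  have "(\<Sum>i\<in>Basis. g i *\<^sub>R i) \<bullet> x = g x" for x
  proof -
    have "g x = g x \<bullet> 1" by simp
    also have "\<dots> = (\<Sum>i\<in>Basis. (x\<bullet>i) * (g i \<bullet> 1))" using Linear_Algebra.linear_componentwise[OF g(1)] by blast
    also have "\<dots> = (\<Sum>i\<in>Basis. g i * (i \<bullet> x))" by (simp add: inner_commute mult.commute)
    finally show ?thesis by (simp add: inner_sum_left)
  qed
  then show ?thesis using g by metis
qed

locale rsys =
  fixes R B :: "'a::euclidean_space set"
  assumes rs: "root_system R" and bs: "is_base R B"
begin

lemma finR: "finite R" and zR: "0 \<notin> R" and spanR: "span R = UNIV"
  and reflR: "\<alpha> \<in> R \<Longrightarrow> \<beta> \<in> R \<Longrightarrow> srefl \<alpha> \<beta> \<in> R"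
  and crystR: "\<alpha> \<in> R \<Longrightarrow> \<beta> \<in> R \<Longrightarrow> 2 * (\<beta> \<bullet> \<alpha>) / (\<alpha> \<bullet> \<alpha>) \<in> \<int>"
  using rs by (auto simp: root_system_def)

lemma BR: "B \<subseteq> R" and indB: "independent B"
  and base_repr: "\<beta> \<in> R \<Longrightarrow> \<exists>c::'a \<Rightarrow> int. \<beta> = (\<Sum>\<alpha>\<in>B. real_of_int (c \<alpha>) *\<^sub>R \<alpha>) \<and>
        ((\<forall>\<alpha>\<in>B. c \<alpha> \<ge> 0) \<or> (\<forall>\<alpha>\<in>B. c \<alpha> \<le> 0))"
  using bs by (auto simp: is_base_def)

lemma finB: "finite B" using finR BR finite_subset by blast

lemma root_nz: "\<alpha> \<in> R \<Longrightarrow> \<alpha> \<noteq> 0" using zR by auto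

lemma negR: "\<alpha> \<in> R \<Longrightarrow> - \<alpha> \<in> R"
  using reflR[of \<alpha> \<alpha>] srefl_self root_nz by metis

lemma spanB: "span B = UNIV"
proof -
  have "R \<subseteq> span B"
  proof
    fix \<beta> assume "\<beta> \<in> R"
    then obtain c :: "'a \<Rightarrow> int" where c: "\<beta> = (\<Sum>\<alpha>\<in>B. real_of_int (c \<alpha>) *\<^sub>R \<alpha>)"
      using base_repr by blast
    show "\<beta> \<in> span B" unfolding c by (intro span_sum span_scale span_base)
  qed
  then have "span R \<subseteq> span B" by (simp add: span_minimal)
  then show ?thesis using spanR by auto
qed

definition dual :: "'a \<Rightarrow> 'a" where
  "dual \<delta> = (SOME v. \<forall>b\<in>B. v \<bullet> b = (if b = \<delta> then 1 else 0))"

definition coef :: "'a \<Rightarrow> 'a \<Rightarrow> real" where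
  "coef \<delta> x = dual \<delta> \<bullet> x"

lemma coef_B: "b \<in> B \<Longrightarrow> coef \<delta> b = (if b = \<delta> then 1 else 0)"
proof -
  have "\<exists>v. \<forall>b\<in>B. v \<bullet> b = (if b = \<delta> then 1 else 0)"
    using exists_dual_vector[OF indB, of "\<lambda>b. if b = \<delta> then 1 else 0"] by blast
  then have "\<forall>b\<in>B. dual \<delta> \<bullet> b = (if b = \<delta> then 1 else 0)"
    unfolding dual_def by (rule someI_ex)
  then show "b \<in> B \<Longrightarrow> ?thesis" by (simp add: coef_def)
qed

lemma coef_add: "coef \<delta> (x + y) = coef \<delta> x + coef \<delta> y"
  and coef_diff: "coef \<delta> (x - y) = coef \<delta> x - coef \<delta> y"
  and coef_neg: "coef \<delta> (- x) = - coef \<delta> x"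
  and coef_scale: "coef \<delta> (c *\<^sub>R x) = c * coef \<delta> x"
  and coef_zero: "coef \<delta> 0 = 0"
  by (simp_all add: coef_def inner_add_right inner_diff_right)

lemma coef_sum: "coef \<delta> (\<Sum>b\<in>A. f b) = (\<Sum>b\<in>A. coef \<delta> (f b))"
  by (simp add: coef_def inner_sum_right)

lemma coef_comb: "\<delta> \<in> B \<Longrightarrow> coef \<delta> (\<Sum>b\<in>B. c b *\<^sub>R b) = c \<delta>"
proof -
  assume d: "\<delta> \<in> B"
  have "coef \<delta> (\<Sum>b\<in>B. c b *\<^sub>R b) = (\<Sum>b\<in>B. c b * (if b = \<delta> then 1 else 0))"
    by (simp add: coef_sum coef_scale coef_B)
  also have "\<dots> = c \<delta>" using d finB by (simp add: sum.delta' if_distrib cong: if_cong)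
  finally show ?thesis .
qed

lemma expansion: "x = (\<Sum>b\<in>B. coef b x *\<^sub>R b)"
proof -
  have "x \<in> span B" using spanB by auto
  then obtain u where u: "x = (\<Sum>v\<in>B. u v *\<^sub>R v)"
    using span_finite[OF finB] by auto
  have "\<forall>b\<in>B. coef b x = u b" using u coef_comb by simp
  then show ?thesis by (subst u) (auto intro!: sum.cong)
qed

lemma coef_eq_0: "(\<And>\<delta>. \<delta> \<in> B \<Longrightarrow> coef \<delta> x = 0) \<Longrightarrow> x = 0"
  by (subst expansion) simp

definition ht :: "'a \<Rightarrow> real" where
  "ht x = (\<Sum>\<delta>\<in>B. coef \<delta> x)"

lemma ht_add: "ht (x + y) = ht x + ht y"
  and ht_diff: "ht (x - y) = ht x - ht y"
  and ht_neg: "ht (- x) = - ht x"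
  and ht_scale: "ht (c *\<^sub>R x) = c * ht x"
  by (simp_all add: ht_def coef_add coef_diff coef_neg coef_scale sum.distrib sum_subtractf
      sum_negf sum_distrib_left)

lemma ht_sum: "ht (\<Sum>b\<in>A. f b) = (\<Sum>b\<in>A. ht (f b))"
  unfolding ht_def coef_sum by (rule sum.swap)

lemma ht_B: "b \<in> B \<Longrightarrow> ht b = 1"
  using finB by (simp add: ht_def coef_B sum.delta)

abbreviation Pos where "Pos \<equiv> pos_roots R B"

lemma Pos_iff: "\<gamma> \<in> Pos \<longleftrightarrow> \<gamma> \<in> R \<and> (\<forall>\<delta>\<in>B. coef \<delta> \<gamma> \<ge> 0)"
proof
  assume g: "\<gamma> \<in> Pos"
  then obtain n :: "'a \<Rightarrow> nat" where n: "\<gamma> = (\<Sum>\<alpha>\<in>B. real (n \<alpha>) *\<^sub>R \<alpha>)"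
    by (auto simp: pos_roots_def Qplus_def)
  then show "\<gamma> \<in> R \<and> (\<forall>\<delta>\<in>B. coef \<delta> \<gamma> \<ge> 0)" using g coef_comb
    by (auto simp: pos_roots_def)
next
  assume a: "\<gamma> \<in> R \<and> (\<forall>\<delta>\<in>B. coef \<delta> \<gamma> \<ge> 0)"
  then obtain c :: "'a \<Rightarrow> int" where c: "\<gamma> = (\<Sum>\<alpha>\<in>B. real_of_int (c \<alpha>) *\<^sub>R \<alpha>)"
    and sg: "(\<forall>\<alpha>\<in>B. c \<alpha> \<ge> 0) \<or> (\<forall>\<alpha>\<in>B. c \<alpha> \<le> 0)"
    using base_repr by blast
  have cc: "\<delta> \<in> B \<Longrightarrow> coef \<delta> \<gamma> = c \<delta>" for \<delta> using c coef_comb by simp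
  have nn: "\<forall>\<alpha>\<in>B. c \<alpha> \<ge> 0"
  proof (cases "\<forall>\<alpha>\<in>B. c \<alpha> \<ge> 0")
    case False
    then have "\<forall>\<alpha>\<in>B. c \<alpha> \<le> 0" using sg by blast
    then have "\<forall>\<alpha>\<in>B. c \<alpha> = 0" using a cc by force
    then have "\<gamma> = 0" using c by simp
    then show ?thesis using a zR by simp
  qed
  have "\<gamma> = (\<Sum>\<alpha>\<in>B. real (nat (c \<alpha>)) *\<^sub>R \<alpha>)"
    unfolding c using nn by (intro sum.cong) auto
  then show "\<gamma> \<in> Pos" using a by (auto simp: pos_roots_def Qplus_def)
qed

lemma root_coef_sign: "\<gamma> \<in> R \<Longrightarrow> (\<forall>\<delta>\<in>B. coef \<delta> \<gamma> \<ge> 0) \<or> (\<forall>\<delta>\<in>B. coef \<delta> \<gamma> \<le> 0)"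
proof -
  assume "\<gamma> \<in> R"
  then obtain c :: "'a \<Rightarrow> int" where c: "\<gamma> = (\<Sum>\<alpha>\<in>B. real_of_int (c \<alpha>) *\<^sub>R \<alpha>)"
    and sg: "(\<forall>\<alpha>\<in>B. c \<alpha> \<ge> 0) \<or> (\<forall>\<alpha>\<in>B. c \<alpha> \<le> 0)"
    using base_repr by blast
  have cc: "\<delta> \<in> B \<Longrightarrow> coef \<delta> \<gamma> = c \<delta>" for \<delta> using c coef_comb by simp
  then show ?thesis using sg by auto
qed

lemma PosR: "\<gamma> \<in> Pos \<Longrightarrow> \<gamma> \<in> R" by (simp add: pos_roots_def)

lemma root_dich: "\<gamma> \<in> R \<Longrightarrow> \<gamma> \<in> Pos \<or> - \<gamma> \<in> Pos"
  using root_coef_sign[of \<gamma>] negR[of \<gamma>] by (auto simp: Pos_iff coef_neg)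

lemma ht_Pos: "\<gamma> \<in> Pos \<Longrightarrow> ht \<gamma> > 0"
proof -
  assume g: "\<gamma> \<in> Pos"
  then have nn: "\<forall>\<delta>\<in>B. coef \<delta> \<gamma> \<ge> 0" and r: "\<gamma> \<in> R" by (auto simp: Pos_iff)
  have "ht \<gamma> \<ge> 0" using nn by (simp add: ht_def sum_nonneg)
  moreover have "ht \<gamma> \<noteq> 0"
  proof
    assume "ht \<gamma> = 0"
    then have "\<forall>\<delta>\<in>B. coef \<delta> \<gamma> = 0" using nn finB by (simp add: ht_def sum_nonneg_eq_0_iff)
    then have "\<gamma> = 0" using coef_eq_0 by blast
    then show False using r zR by simp
  qed
  ultimately show ?thesis by simp
qed

lemma not_both: "\<gamma> \<in> Pos \<Longrightarrow> - \<gamma> \<notin> Pos"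
  using ht_Pos[of \<gamma>] ht_Pos[of "-\<gamma>"] ht_neg by force

lemma Pos_ht_iff: "\<gamma> \<in> R \<Longrightarrow> \<gamma> \<in> Pos \<longleftrightarrow> ht \<gamma> > 0"
  using root_dich ht_Pos ht_neg by force

lemma neg_Pos_iff: "\<gamma> \<in> R \<Longrightarrow> \<gamma> \<notin> Pos \<longleftrightarrow> - \<gamma> \<in> Pos"
  using root_dich not_both by blast

lemma B_Pos: "\<delta> \<in> B \<Longrightarrow> \<delta> \<in> Pos"
  using BR by (auto simp: Pos_iff coef_B)

lemma B_nz: "\<delta> \<in> B \<Longrightarrow> \<delta> \<noteq> 0" using BR root_nz by auto

lemma root_pos_coef: "\<gamma> \<in> R \<Longrightarrow> \<delta> \<in> B \<Longrightarrow> coef \<delta> \<gamma> > 0 \<Longrightarrow> \<gamma> \<in> Pos"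
  using root_coef_sign[of \<gamma>] by (auto simp: Pos_iff)

lemma key:
  assumes g: "\<gamma> \<in> Pos" and d: "\<delta> \<in> B" and np: "\<not> (\<exists>c. \<gamma> = c *\<^sub>R \<delta>)"
  shows "srefl \<delta> \<gamma> \<in> Pos"
proof -
  have "\<exists>\<delta>0\<in>B. \<delta>0 \<noteq> \<delta> \<and> coef \<delta>0 \<gamma> \<noteq> 0"
  proof (rule ccontr)
    assume "\<not> ?thesis"
    then have z: "\<forall>\<delta>0\<in>B. \<delta>0 \<noteq> \<delta> \<longrightarrow> coef \<delta>0 \<gamma> = 0" by blast
    have "\<gamma> = (\<Sum>b\<in>B. coef b \<gamma> *\<^sub>R b)" by (rule expansion)
    also have "\<dots> = (\<Sum>b\<in>B. (if b = \<delta> then coef \<delta> \<gamma> *\<^sub>R \<delta> else 0))"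
      using z by (intro sum.cong) auto
    also have "\<dots> = coef \<delta> \<gamma> *\<^sub>R \<delta>" using d finB by (simp add: sum.delta')
    finally show False using np by blast
  qed
  then obtain \<delta>0 where d0: "\<delta>0 \<in> B" "\<delta>0 \<noteq> \<delta>" "coef \<delta>0 \<gamma> \<noteq> 0" by blast
  have pos0: "coef \<delta>0 \<gamma> > 0" using g d0 by (force simp: Pos_iff)
  have "coef \<delta>0 (srefl \<delta> \<gamma>) = coef \<delta>0 \<gamma>"
    using d0 d by (simp add: srefl_def coef_diff coef_scale coef_B)
  moreover have "srefl \<delta> \<gamma> \<in> R" using reflR d BR g PosR by blast
  ultimately show ?thesis using root_pos_coef pos0 d0 by simp
qed

lemma prop_pos: "\<gamma> \<in> Pos \<Longrightarrow> \<delta> \<in> B \<Longrightarrow> \<gamma> = c *\<^sub>R \<delta> \<Longrightarrow> c > 0"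
  using ht_Pos[of \<gamma>] ht_B[of \<delta>] by (simp add: ht_scale)

end


lemma gen_group_comp: "w \<in> gen_group G \<Longrightarrow> v \<in> gen_group G \<Longrightarrow> w \<circ> v \<in> gen_group G"
  by (induction w rule: gen_group.induct) (auto simp: comp_assoc intro: gen_group.intros)

definition wd :: "('a \<Rightarrow> 'a) list \<Rightarrow> 'a \<Rightarrow> 'a" where
  "wd ss = foldr (\<circ>) ss id"

lemma wd_Nil[simp]: "wd [] = id" and wd_Cons[simp]: "wd (s # ss) = s \<circ> wd ss"
  by (simp_all add: wd_def)

lemma wd_append: "wd (xs @ ys) = wd xs \<circ> wd ys"
  by (induction xs) (simp_all add: comp_assoc)

lemma gen_group_wd: "w \<in> gen_group G \<longleftrightarrow> (\<exists>ss. set ss \<subseteq> G \<and> w = wd ss)"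
proof
  assume "w \<in> gen_group G" then show "\<exists>ss. set ss \<subseteq> G \<and> w = wd ss"
  proof (induction w rule: gen_group.induct)
    case gen_id then show ?case by (intro exI[of _ "[]"]) simp
  next
    case (gen_step s w) then obtain ss where "set ss \<subseteq> G" "w = wd ss" by blast
    then show ?case using gen_step by (intro exI[of _ "s # ss"]) simp
  qed
next
  assume "\<exists>ss. set ss \<subseteq> G \<and> w = wd ss"
  then obtain ss where "set ss \<subseteq> G" "w = wd ss" by blast
  then show "w \<in> gen_group G"
    by (induction ss arbitrary: w) (auto intro: gen_group.intros)
qed

lemma gen_group_mono: assumes "G \<subseteq> H" shows "gen_group G \<subseteq> gen_group H"
proof
  fix w assume "w \<in> gen_group G"
  then obtain ss where "set ss \<subseteq> G" "w = wd ss" using gen_group_wd by blast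
  then show "w \<in> gen_group H" using assms gen_group_wd by blast
qed

context rsys begin

abbreviation W where "W \<equiv> weyl R"
abbreviation S where "S \<equiv> simple_refls B"
abbreviation len where "len \<equiv> wlen B"

lemma W_comp: "w \<in> W \<Longrightarrow> v \<in> W \<Longrightarrow> w \<circ> v \<in> W"
  unfolding weyl_def by (rule gen_group_comp)

lemma W_srefl: "\<alpha> \<in> R \<Longrightarrow> srefl \<alpha> \<in> W"
  unfolding weyl_def using gen_group.gen_step[OF _ gen_group.gen_id, of "srefl \<alpha>"] by simp

lemma W_id: "id \<in> W" unfolding weyl_def by (rule gen_group.gen_id)

lemma S_sub: "S \<subseteq> srefl ` R" using BR by (auto simp: simple_refls_def)

lemma W_orth: "w \<in> W \<Longrightarrow> orth w"
  unfolding weyl_def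
proof (induction w rule: gen_group.induct)
  case gen_id show ?case by (rule orth_id)
next
  case (gen_step s w) then show ?case using orth_comp orth_srefl root_nz by blast
qed

lemma W_R: "w \<in> W \<Longrightarrow> \<alpha> \<in> R \<Longrightarrow> w \<alpha> \<in> R"
  unfolding weyl_def
  by (induction w arbitrary: \<alpha> rule: gen_group.induct) (auto intro: reflR)

lemma W_linear: "w \<in> W \<Longrightarrow> linear w" using W_orth orth_def by blast
lemma W_inner: "w \<in> W \<Longrightarrow> w x \<bullet> w y = x \<bullet> y" using W_orth orth_def by blast
lemma W_neg: "w \<in> W \<Longrightarrow> w (- x) = - w x" using W_orth orth_neg by blast

lemma W_inv_ex: "w \<in> W \<Longrightarrow> \<exists>w'\<in>W. w' \<circ> w = id \<and> w \<circ> w' = id"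
  unfolding weyl_def
proof (induction w rule: gen_group.induct)
  case gen_id then show ?case by (intro bexI[of _ id] gen_group.gen_id) auto
next
  case (gen_step s w)
  then obtain w' where w': "w' \<in> gen_group (srefl ` R)" "w' \<circ> w = id" "w \<circ> w' = id" by blast
  obtain \<alpha> where a: "\<alpha> \<in> R" "s = srefl \<alpha>" using gen_step by blast
  have ss: "s \<circ> s = id" using a srefl_comp_self root_nz by blast
  have "w' \<circ> s \<in> gen_group (srefl ` R)"
    using gen_group_comp[OF w'(1) gen_group.gen_step[OF gen_step(1) gen_group.gen_id]] by simp
  moreover have "(w' \<circ> s) \<circ> (s \<circ> w) = id" using w' ss by (metis comp_assoc comp_id)
  moreover have "(s \<circ> w) \<circ> (w' \<circ> s) = id" using w' ss by (metis comp_assoc comp_id)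
  ultimately show ?case by blast
qed

definition winv where "winv w = inv w"

lemma winv: assumes "w \<in> W" shows "winv w \<in> W" "winv w \<circ> w = id" "w \<circ> winv w = id"
proof -
  obtain w' where w': "w' \<in> W" "w' \<circ> w = id" "w \<circ> w' = id" using W_inv_ex[OF assms] by blast
  then have "winv w = w'" unfolding winv_def by (intro inv_unique_comp) auto
  then show "winv w \<in> W" "winv w \<circ> w = id" "w \<circ> winv w = id" using w' by auto
qed

lemma winv_app: "w \<in> W \<Longrightarrow> winv w (w x) = x" "w \<in> W \<Longrightarrow> w (winv w x) = x"
  using winv[of w] by (metis comp_apply id_apply)+

lemma winv_comp: "w \<in> W \<Longrightarrow> v \<in> W \<Longrightarrow> winv (w \<circ> v) = winv v \<circ> winv w"
proof -
  assume w: "w \<in> W" and v: "v \<in> W"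
  have "(winv v \<circ> winv w) \<circ> (w \<circ> v) = id" "(w \<circ> v) \<circ> (winv v \<circ> winv w) = id"
    using winv[OF w] winv[OF v] by (simp_all add: fun_eq_iff winv_app[OF w] winv_app[OF v])
  then show ?thesis unfolding winv_def by (intro inv_unique_comp) auto
qed

lemma winv_srefl: "\<alpha> \<in> R \<Longrightarrow> winv (srefl \<alpha>) = srefl \<alpha>"
  unfolding winv_def using srefl_comp_self[of \<alpha>] root_nz by (intro inv_unique_comp) auto

lemma winv_winv: "w \<in> W \<Longrightarrow> winv (winv w) = w"
  unfolding winv_def using winv[of w] unfolding winv_def by (intro inv_unique_comp) auto

lemma W_inner_winv: "w \<in> W \<Longrightarrow> w x \<bullet> y = x \<bullet> winv w y"
  by (metis W_inner winv_app(2))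

lemma weights_srefl: "\<mu> \<in> weights R \<Longrightarrow> \<beta> \<in> R \<Longrightarrow> srefl \<beta> \<mu> \<in> weights R"
proof -
  assume m: "\<mu> \<in> weights R" and b: "\<beta> \<in> R"
  show ?thesis unfolding weights_def mem_Collect_eq
  proof
    fix \<alpha> assume a: "\<alpha> \<in> R"
    have "srefl \<beta> \<mu> \<bullet> \<alpha> = \<mu> \<bullet> srefl \<beta> \<alpha>" by (rule srefl_sym)
    moreover have "\<alpha> \<bullet> \<alpha> = srefl \<beta> \<alpha> \<bullet> srefl \<beta> \<alpha>" using srefl_inner b root_nz by metis
    moreover have "srefl \<beta> \<alpha> \<in> R" using a b reflR by blast
    ultimately show "2 * (srefl \<beta> \<mu> \<bullet> \<alpha>) / (\<alpha> \<bullet> \<alpha>) \<in> \<int>" using m by (simp add: weights_def)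
  qed
qed

lemma W_weights: "w \<in> W \<Longrightarrow> \<mu> \<in> weights R \<Longrightarrow> w \<mu> \<in> weights R"
  unfolding weyl_def
  by (induction w arbitrary: \<mu> rule: gen_group.induct) (auto intro: weights_srefl)

lemma S_W: "s \<in> S \<Longrightarrow> s \<in> W" using S_sub W_srefl by blast

lemma wd_W: "set ss \<subseteq> S \<Longrightarrow> wd ss \<in> W"
  by (induction ss) (auto simp: W_id intro: W_comp S_W)

lemma S_invol: "s \<in> S \<Longrightarrow> s \<circ> s = id"
  using S_sub srefl_comp_self root_nz by blast

lemma wd_rev: "set ss \<subseteq> S \<Longrightarrow> wd (rev ss) \<circ> wd ss = id"
proof (induction ss)
  case Nil then show ?case by simp
next
  case (Cons s ss)
  then have "wd (rev (s # ss)) \<circ> wd (s # ss) = wd (rev ss) \<circ> (s \<circ> s) \<circ> wd ss"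
    by (simp add: wd_append comp_assoc)
  also have "\<dots> = wd (rev ss) \<circ> wd ss" using Cons.prems S_invol by simp
  also have "\<dots> = id" using Cons by (simp add: comp_def id_def)
  finally show ?case .
qed

lemma refl_word_pos:
  "\<beta> \<in> Pos \<Longrightarrow> \<exists>ss. set ss \<subseteq> S \<and> odd (length ss) \<and> srefl \<beta> = wd ss"
proof (induction "nat \<lfloor>ht \<beta>\<rfloor>" arbitrary: \<beta> rule: less_induct)
  case less
  show ?case
  proof (cases "\<exists>\<delta>\<in>B. \<exists>c. \<beta> = c *\<^sub>R \<delta>")
    case True
    then obtain \<delta> c where d: "\<delta> \<in> B" "\<beta> = c *\<^sub>R \<delta>" by blast
    then have "c \<noteq> 0" using less.prems PosR zR by auto
    then have "srefl \<beta> = srefl \<delta>" using d srefl_scaleR_root by simp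
    then show ?thesis using d by (intro exI[of _ "[srefl \<delta>]"]) (auto simp: simple_refls_def)
  next
    case False
    have r: "\<beta> \<in> R" using less.prems PosR by blast
    have nn: "\<forall>\<delta>\<in>B. coef \<delta> \<beta> \<ge> 0" using less.prems Pos_iff by blast
    have "\<beta> \<bullet> \<beta> = (\<Sum>\<delta>\<in>B. coef \<delta> \<beta> * (\<beta> \<bullet> \<delta>))"
      by (subst (2) expansion) (simp add: inner_sum_right)
    moreover have "\<beta> \<bullet> \<beta> > 0" using r root_nz by simp
    ultimately have "\<exists>\<delta>\<in>B. coef \<delta> \<beta> * (\<beta> \<bullet> \<delta>) > 0"
    proof -
      assume a1: "\<beta> \<bullet> \<beta> = (\<Sum>\<delta>\<in>B. coef \<delta> \<beta> * (\<beta> \<bullet> \<delta>))" and a2: "\<beta> \<bullet> \<beta> > 0"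
      show ?thesis
      proof (rule ccontr)
        assume "\<not> ?thesis"
        then have "(\<Sum>\<delta>\<in>B. coef \<delta> \<beta> * (\<beta> \<bullet> \<delta>)) \<le> 0" by (intro sum_nonpos) (auto simp: not_less)
        then show False using a1 a2 by linarith
      qed
    qed
    then obtain \<delta> where d: "\<delta> \<in> B" "coef \<delta> \<beta> * (\<beta> \<bullet> \<delta>) > 0" by blast
    then have bd: "\<beta> \<bullet> \<delta> > 0" using nn d(1) by (force simp: zero_less_mult_iff)
    have dR: "\<delta> \<in> R" using d BR by blast
    define k where "k = 2 * (\<beta> \<bullet> \<delta>) / (\<delta> \<bullet> \<delta>)"
    have kpos: "k > 0" using bd dR root_nz by (simp add: k_def)
    have kint: "k \<in> \<int>" using crystR[OF dR r] by (simp add: k_def)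
    obtain m where m: "k = of_int m" using kint by (auto elim: Ints_cases)
    have "m > 0" using kpos m by simp
    then have k1: "k \<ge> 1" using m by simp
    define \<beta>' where "\<beta>' = srefl \<delta> \<beta>"
    have b'P: "\<beta>' \<in> Pos" using key[OF less.prems d(1)] False d by (auto simp: \<beta>'_def)
    have htb': "ht \<beta>' = ht \<beta> - k" using d by (simp add: \<beta>'_def srefl_def k_def ht_diff ht_scale ht_B)
    have "nat \<lfloor>ht \<beta>'\<rfloor> < nat \<lfloor>ht \<beta>\<rfloor>"
    proof -
      have "ht \<beta>' \<ge> 0" using ht_Pos[OF b'P] by simp
      moreover have "ht \<beta>' \<le> ht \<beta> - 1" using htb' k1 by simp
      ultimately show ?thesis by linarith
    qed
    then obtain ss where ss: "set ss \<subseteq> S" "odd (length ss)" "srefl \<beta>' = wd ss"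
      using less.hyps b'P by blast
    have "srefl \<delta> \<circ> srefl \<beta>' \<circ> srefl \<delta> = srefl \<beta>"
    proof -
      have o: "orth (srefl \<delta>)" using orth_srefl dR root_nz by blast
      have "srefl \<delta> \<circ> srefl \<beta> = srefl \<beta>' \<circ> srefl \<delta>"
        unfolding \<beta>'_def using srefl_conj_fun[OF o] .
      then have "srefl \<delta> \<circ> srefl \<beta>' \<circ> srefl \<delta> = srefl \<delta> \<circ> (srefl \<delta> \<circ> srefl \<beta>)"
        by (simp add: comp_assoc)
      also have "\<dots> = srefl \<beta>" using srefl_comp_self[of \<delta>] dR root_nz
        by (simp add: comp_assoc[symmetric])
      finally show ?thesis .
    qed
    then have "srefl \<beta> = wd ([srefl \<delta>] @ ss @ [srefl \<delta>])"
      using ss by (simp add: wd_append comp_assoc)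
    then show ?thesis using ss d by (intro exI[of _ "[srefl \<delta>] @ ss @ [srefl \<delta>]"]) (auto simp: simple_refls_def)
  qed
qed

lemma srefl_neg: "srefl (- \<alpha>) = srefl \<alpha>"
  using srefl_scaleR_root[of "-1" \<alpha>] by simp

lemma refl_word: "\<beta> \<in> R \<Longrightarrow> \<exists>ss. set ss \<subseteq> S \<and> odd (length ss) \<and> srefl \<beta> = wd ss"
  using root_dich[of \<beta>] refl_word_pos[of \<beta>] refl_word_pos[of "-\<beta>"] srefl_neg[of \<beta>] by auto

lemma W_word: "w \<in> W \<Longrightarrow> \<exists>ss. set ss \<subseteq> S \<and> w = wd ss"
  unfolding weyl_def
proof (induction w rule: gen_group.induct)
  case gen_id then show ?case by (intro exI[of _ "[]"]) simp
next
  case (gen_step s w)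
  then obtain ss where ss: "set ss \<subseteq> S" "w = wd ss" by blast
  obtain \<beta> where b: "\<beta> \<in> R" "s = srefl \<beta>" using gen_step by blast
  obtain ts where ts: "set ts \<subseteq> S" "srefl \<beta> = wd ts" using refl_word[OF b(1)] by blast
  show ?case using ss ts b by (intro exI[of _ "ts @ ss"]) (simp add: wd_append)
qed

lemma W_iff_word: "w \<in> W \<longleftrightarrow> (\<exists>ss. set ss \<subseteq> S \<and> w = wd ss)"
  using W_word wd_W by blast

end


context rsys begin

lemma len_word: assumes "w \<in> W" shows "\<exists>ss. set ss \<subseteq> S \<and> length ss = len w \<and> w = wd ss"
proof -
  obtain ss where ss: "set ss \<subseteq> S" "w = wd ss" using W_word[OF assms] by blast
  have "\<exists>n ss. length ss = n \<and> set ss \<subseteq> S \<and> w = foldr (\<circ>) ss id"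
    using ss by (auto simp: wd_def)
  then have "\<exists>ss. length ss = len w \<and> set ss \<subseteq> S \<and> w = foldr (\<circ>) ss id"
    unfolding wlen_def by (rule LeastI_ex[where P = "\<lambda>n. \<exists>ss. length ss = n \<and> set ss \<subseteq> S \<and> w = foldr (\<circ>) ss id"])
  then show ?thesis by (auto simp: wd_def)
qed

lemma len_le: "set ss \<subseteq> S \<Longrightarrow> len (wd ss) \<le> length ss"
  unfolding wlen_def wd_def by (rule Least_le) blast

lemma len_id: "len id = 0"
  using len_le[of "[]"] by simp

lemma len_zero: "w \<in> W \<Longrightarrow> len w = 0 \<Longrightarrow> w = id"
  using len_word[of w] by auto

lemma winv_wd: "set ss \<subseteq> S \<Longrightarrow> winv (wd ss) = wd (rev ss)"
proof -
  assume ss: "set ss \<subseteq> S"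
  have "wd (rev ss) \<circ> wd ss = id" using wd_rev[OF ss] .
  moreover have "wd ss \<circ> wd (rev ss) = id" using wd_rev[of "rev ss"] ss by simp
  ultimately show ?thesis unfolding winv_def by (intro inv_unique_comp) auto
qed

lemma len_winv_le: "w \<in> W \<Longrightarrow> len (winv w) \<le> len w"
proof -
  assume w: "w \<in> W"
  obtain ss where ss: "set ss \<subseteq> S" "length ss = len w" "w = wd ss" using len_word[OF w] by blast
  then have "winv w = wd (rev ss)" using winv_wd by simp
  then show ?thesis using len_le[of "rev ss"] ss by simp
qed

lemma len_winv: assumes w: "w \<in> W" shows "len (winv w) = len w"
proof -
  have "len (winv (winv w)) \<le> len (winv w)" by (rule len_winv_le[OF winv(1)[OF w]])
  then have "len w \<le> len (winv w)" using winv_winv[OF w] by simp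
  then show ?thesis using len_winv_le[OF w] by simp
qed

lemma len_comp_le: "w \<in> W \<Longrightarrow> v \<in> W \<Longrightarrow> len (w \<circ> v) \<le> len w + len v"
proof -
  assume w: "w \<in> W" and v: "v \<in> W"
  obtain ss where ss: "set ss \<subseteq> S" "length ss = len w" "w = wd ss" using len_word[OF w] by blast
  obtain ts where ts: "set ts \<subseteq> S" "length ts = len v" "v = wd ts" using len_word[OF v] by blast
  have "w \<circ> v = wd (ss @ ts)" using ss ts by (simp add: wd_append)
  then show ?thesis using len_le[of "ss @ ts"] ss ts by simp
qed

lemma B_R: "\<delta> \<in> B \<Longrightarrow> \<delta> \<in> R" using BR by blast

lemma srefl_invol_R: "\<alpha> \<in> R \<Longrightarrow> srefl \<alpha> (srefl \<alpha> x) = x"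
  using srefl_invol root_nz by blast

lemma comp_srefl_srefl: "\<alpha> \<in> R \<Longrightarrow> w \<circ> srefl \<alpha> \<circ> srefl \<alpha> = w"
  by (auto simp: fun_eq_iff srefl_invol_R)

lemma srefl_srefl_comp: "\<alpha> \<in> R \<Longrightarrow> srefl \<alpha> \<circ> (srefl \<alpha> \<circ> w) = w"
  by (auto simp: fun_eq_iff srefl_invol_R)

lemma len_srefl_le: "\<alpha> \<in> R \<Longrightarrow> len (srefl \<alpha>) \<ge> 1"
proof (rule ccontr)
  assume a: "\<alpha> \<in> R" and "\<not> len (srefl \<alpha>) \<ge> 1"
  then have "srefl \<alpha> = id" using len_zero W_srefl by simp
  then have "srefl \<alpha> \<alpha> = \<alpha>" by simp
  moreover have "srefl \<alpha> \<alpha> = - \<alpha>" using srefl_self a root_nz by blast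
  ultimately have "\<alpha> = - \<alpha>" by simp
  then have "(2::real) *\<^sub>R \<alpha> = 0" by (simp add: scaleR_2 eq_neg_iff_add_eq_0)
  then have "\<alpha> = 0" by simp
  then show False using a root_nz by blast
qed

lemma len_S: "\<delta> \<in> B \<Longrightarrow> len (srefl \<delta>) \<le> 1"
  using len_le[of "[srefl \<delta>]"] by (simp add: simple_refls_def)

lemma len_right_le: "w \<in> W \<Longrightarrow> \<delta> \<in> B \<Longrightarrow> len (w \<circ> srefl \<delta>) \<le> len w + 1"
  using len_comp_le[of w "srefl \<delta>"] len_S[of \<delta>] W_srefl[OF B_R] by force

lemma len_right_ge: assumes w: "w \<in> W" and d: "\<delta> \<in> B" shows "len w \<le> len (w \<circ> srefl \<delta>) + 1"
proof -
  have "len ((w \<circ> srefl \<delta>) \<circ> srefl \<delta>) \<le> len (w \<circ> srefl \<delta>) + 1"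
    by (rule len_right_le[OF W_comp[OF w W_srefl[OF B_R[OF d]]] d])
  then show ?thesis by (simp only: comp_srefl_srefl[OF B_R[OF d]])
qed

lemma right_descent: assumes w: "w \<in> W" and l: "len w > 0"
  shows "\<exists>\<delta>\<in>B. len (w \<circ> srefl \<delta>) < len w"
proof -
  obtain ss where ss: "set ss \<subseteq> S" "length ss = len w" "w = wd ss" using len_word[OF w] by blast
  then have ne: "ss \<noteq> []" using l by auto
  then have sp: "ss = butlast ss @ [last ss]" by simp
  have "last ss \<in> S" using ss ne by auto
  then obtain \<delta> where d: "\<delta> \<in> B" "last ss = srefl \<delta>" by (auto simp: simple_refls_def)
  have "w = wd (butlast ss @ [last ss])" using ss(3) sp by simp
  also have "\<dots> = wd (butlast ss) \<circ> srefl \<delta>" using d(2) by (simp only: wd_append wd_Cons wd_Nil comp_id)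
  finally have "w \<circ> srefl \<delta> = wd (butlast ss) \<circ> srefl \<delta> \<circ> srefl \<delta>" by simp
  also have "\<dots> = wd (butlast ss)" using comp_srefl_srefl[OF B_R[OF d(1)]] .
  finally have "len (w \<circ> srefl \<delta>) \<le> length (butlast ss)"
    using len_le[of "butlast ss"] ss(1) in_set_butlastD by fastforce
  moreover have "length (butlast ss) < len w" using ss ne l by simp
  ultimately show ?thesis using d(1) by force
qed

lemma deletion:
  "set ss \<subseteq> S \<Longrightarrow> \<delta> \<in> B \<Longrightarrow> wd ss \<delta> \<notin> Pos \<Longrightarrow>
     \<exists>ss'. set ss' \<subseteq> S \<and> length ss' < length ss \<and> wd ss \<circ> srefl \<delta> = wd ss'"
proof (induction ss)
  case Nil then show ?case using B_Pos by simp
next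
  case (Cons s rest)
  obtain \<alpha> where a: "\<alpha> \<in> B" "s = srefl \<alpha>" using Cons.prems by (auto simp: simple_refls_def)
  have rS: "set rest \<subseteq> S" using Cons.prems by simp
  define v where "v = wd rest"
  have v: "v \<in> W" using wd_W[OF rS] by (simp add: v_def)
  show ?case
  proof (cases "v \<delta> \<in> Pos")
    case False
    then have "wd rest \<delta> \<notin> Pos" by (simp add: v_def)
    from Cons.IH[OF rS Cons.prems(2) this] obtain ss' where
      ss': "set ss' \<subseteq> S" "length ss' < length rest" "wd rest \<circ> srefl \<delta> = wd ss'" by blast
    have "wd (s # rest) \<circ> srefl \<delta> = s \<circ> (wd rest \<circ> srefl \<delta>)" by (simp only: wd_Cons comp_assoc)
    then have "wd (s # rest) \<circ> srefl \<delta> = wd (s # ss')" using ss'(3) by (simp only: wd_Cons)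
    moreover have "set (s # ss') \<subseteq> S" "length (s # ss') < length (s # rest)" using Cons.prems ss' by auto
    ultimately show ?thesis by blast
  next
    case True
    have "s (v \<delta>) \<notin> Pos" using Cons.prems by (simp add: v_def)
    then obtain c where c: "v \<delta> = c *\<^sub>R \<alpha>" using key[OF True a(1)] a by blast
    have "c \<noteq> 0" using c True PosR zR by auto
    then have sr: "srefl (v \<delta>) = s" using c a srefl_scaleR_root by simp
    have "v \<circ> srefl \<delta> = srefl (v \<delta>) \<circ> v" using srefl_conj_fun W_orth[OF v] by blast
    then have "wd (s # rest) \<circ> srefl \<delta> = s \<circ> s \<circ> v" using sr by (simp add: v_def comp_assoc)
    also have "\<dots> = v" using a srefl_srefl_comp[OF B_R[OF a(1)]] by (simp add: comp_assoc)
    finally have "wd (s # rest) \<circ> srefl \<delta> = wd rest" unfolding v_def .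
    moreover have "length rest < length (s # rest)" by simp
    ultimately show ?thesis using rS by blast
  qed
qed

lemma len_right_lt: assumes w: "w \<in> W" and d: "\<delta> \<in> B" and n: "w \<delta> \<notin> Pos"
  shows "len (w \<circ> srefl \<delta>) < len w"
proof -
  obtain ss where ss: "set ss \<subseteq> S" "length ss = len w" "w = wd ss" using len_word[OF w] by blast
  then obtain ss' where "set ss' \<subseteq> S" "length ss' < length ss" "wd ss \<circ> srefl \<delta> = wd ss'"
    using deletion[OF ss(1) d] n by blast
  then show ?thesis using len_le[of ss'] ss by simp
qed

lemma len_right_gt: assumes w: "w \<in> W" and d: "\<delta> \<in> B" and p: "w \<delta> \<in> Pos"
  shows "len w < len (w \<circ> srefl \<delta>)"
proof -
  have w': "w \<circ> srefl \<delta> \<in> W" using W_comp[OF w W_srefl[OF B_R[OF d]]] .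
  have "(w \<circ> srefl \<delta>) \<delta> = - w \<delta>" using srefl_self[OF B_nz[OF d]] W_neg[OF w] by simp
  then have "(w \<circ> srefl \<delta>) \<delta> \<notin> Pos" using not_both[OF p] by simp
  then have "len (w \<circ> srefl \<delta> \<circ> srefl \<delta>) < len (w \<circ> srefl \<delta>)" using len_right_lt[OF w' d] by blast
  then show ?thesis by (simp only: comp_srefl_srefl[OF B_R[OF d]])
qed

lemma len_right_iff: "w \<in> W \<Longrightarrow> \<delta> \<in> B \<Longrightarrow> len (w \<circ> srefl \<delta>) < len w \<longleftrightarrow> w \<delta> \<notin> Pos"
  using len_right_lt len_right_gt by fastforce

lemma winv_comp_srefl: "w \<in> W \<Longrightarrow> \<alpha> \<in> R \<Longrightarrow> winv (srefl \<alpha> \<circ> w) = winv w \<circ> srefl \<alpha>"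
  using winv_comp[OF W_srefl] winv_srefl by simp

lemma len_left_eq: assumes w: "w \<in> W" and a: "\<alpha> \<in> R"
  shows "len (srefl \<alpha> \<circ> w) = len (winv w \<circ> srefl \<alpha>)"
proof -
  have "len (srefl \<alpha> \<circ> w) = len (winv (srefl \<alpha> \<circ> w))"
    by (rule len_winv[symmetric]) (rule W_comp[OF W_srefl[OF a] w])
  also have "winv (srefl \<alpha> \<circ> w) = winv w \<circ> srefl \<alpha>" by (rule winv_comp_srefl[OF w a])
  finally show ?thesis .
qed

lemma len_left_lt_iff: assumes w: "w \<in> W" and d: "\<delta> \<in> B"
  shows "len (srefl \<delta> \<circ> w) < len w \<longleftrightarrow> winv w \<delta> \<notin> Pos"
proof -
  have e1: "len (srefl \<delta> \<circ> w) = len (winv w \<circ> srefl \<delta>)" by (rule len_left_eq[OF w B_R[OF d]])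
  have e2: "len w = len (winv w)" by (rule len_winv[OF w, symmetric])
  show ?thesis unfolding e1 e2 by (rule len_right_iff[OF winv(1)[OF w] d])
qed

lemma len_left_gt_iff: assumes w: "w \<in> W" and d: "\<delta> \<in> B"
  shows "len w < len (srefl \<delta> \<circ> w) \<longleftrightarrow> winv w \<delta> \<in> Pos"
proof -
  have e1: "len (srefl \<delta> \<circ> w) = len (winv w \<circ> srefl \<delta>)" by (rule len_left_eq[OF w B_R[OF d]])
  have e2: "len w = len (winv w)" by (rule len_winv[OF w, symmetric])
  have wi: "winv w \<in> W" by (rule winv(1)[OF w])
  show ?thesis unfolding e1 e2 using len_right_gt[OF wi d] len_right_lt[OF wi d] by fastforce
qed

lemma pos_pres_id: assumes z: "z \<in> W" and p: "\<And>\<gamma>. \<gamma> \<in> Pos \<Longrightarrow> z \<gamma> \<in> Pos" shows "z = id"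
proof (rule ccontr)
  assume "z \<noteq> id"
  then have "len z > 0" using len_zero[OF z] by auto
  then obtain \<delta> where "\<delta> \<in> B" "len (z \<circ> srefl \<delta>) < len z" using right_descent[OF z] by blast
  then show False using len_right_iff[OF z] p B_Pos by blast
qed

end


lemma orth_sgn: "orth f \<Longrightarrow> f (sgn x) = sgn (f x)"
  by (simp add: sgn_div_norm orth_norm orth_def linear_scale)

context rsys begin

definition U where "U = sgn ` R"
definition Ninv where "Ninv w = {u \<in> U. ht u > 0 \<and> ht (w u) < 0}"

lemma finU: "finite U" using finR by (simp add: U_def)

lemma ht_sgn: "ht (sgn x) = ht x / norm x"
  by (simp add: sgn_div_norm ht_scale divide_inverse mult.commute)

lemma root_ht_ne: "\<gamma> \<in> R \<Longrightarrow> ht \<gamma> \<noteq> 0"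
  using root_dich ht_Pos ht_neg by force

lemma ht_sgn_pos: "\<gamma> \<in> R \<Longrightarrow> ht (sgn \<gamma>) > 0 \<longleftrightarrow> ht \<gamma> > 0"
  using root_nz by (simp add: ht_sgn divide_pos_pos zero_less_divide_iff)

lemma U_ht_ne: "u \<in> U \<Longrightarrow> ht u \<noteq> 0"
  using root_ht_ne root_nz by (auto simp: U_def ht_sgn)

lemma W_U: assumes w: "w \<in> W" and u: "u \<in> U" shows "w u \<in> U"
proof -
  obtain \<gamma> where g: "\<gamma> \<in> R" "u = sgn \<gamma>" using u by (auto simp: U_def)
  then have "w u = sgn (w \<gamma>)" using orth_sgn W_orth[OF w] by simp
  then show ?thesis using W_R[OF w g(1)] by (auto simp: U_def)
qed

lemma U_neg: "u \<in> U \<Longrightarrow> - u \<in> U"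
  using negR by (auto simp: U_def sgn_minus[symmetric])

lemma key_U: assumes d: "\<delta> \<in> B" and u: "u \<in> U" and h: "ht u > 0" and ne: "u \<noteq> sgn \<delta>"
  shows "ht (srefl \<delta> u) > 0"
proof -
  obtain \<gamma> where g: "\<gamma> \<in> R" "u = sgn \<gamma>" using u by (auto simp: U_def)
  then have gP: "\<gamma> \<in> Pos" using h ht_sgn_pos Pos_ht_iff by blast
  have np: "\<not> (\<exists>c. \<gamma> = c *\<^sub>R \<delta>)"
  proof
    assume "\<exists>c. \<gamma> = c *\<^sub>R \<delta>"
    then obtain c where c: "\<gamma> = c *\<^sub>R \<delta>" by blast
    then have "c > 0" using prop_pos gP d by blast
    then have "sgn \<gamma> = sgn \<delta>" using c by (simp add: sgn_scaleR)
    then show False using ne g by simp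
  qed
  have "srefl \<delta> \<gamma> \<in> Pos" by (rule key[OF gP d np])
  moreover have "srefl \<delta> u = sgn (srefl \<delta> \<gamma>)" using g orth_sgn orth_srefl B_nz[OF d] by metis
  ultimately show ?thesis using ht_sgn_pos PosR Pos_ht_iff by metis
qed

lemma srefl_sgn_self: "\<delta> \<in> B \<Longrightarrow> srefl \<delta> (sgn \<delta>) = - sgn \<delta>"
  using srefl_self[OF B_nz] by (simp add: sgn_div_norm srefl_scale)

lemma U_sgn_B: "\<delta> \<in> B \<Longrightarrow> sgn \<delta> \<in> U" using BR by (auto simp: U_def)

lemma srefl_U: "\<delta> \<in> B \<Longrightarrow> x \<in> U \<Longrightarrow> srefl \<delta> x \<in> U"
  using W_U W_srefl B_R by blast

lemma flip_same: assumes d: "\<delta> \<in> B" and x: "x \<in> U" and n1: "x \<noteq> sgn \<delta>" and n2: "x \<noteq> - sgn \<delta>"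
  shows "ht (srefl \<delta> x) > 0 \<longleftrightarrow> ht x > 0"
proof
  assume "ht x > 0" then show "ht (srefl \<delta> x) > 0" using key_U d x n1 by blast
next
  assume a: "ht (srefl \<delta> x) > 0"
  show "ht x > 0"
  proof (rule ccontr)
    assume "\<not> ht x > 0"
    then have "ht (- x) > 0" using U_ht_ne[OF x] ht_neg by force
    moreover have "- x \<noteq> sgn \<delta>" using n2 by (metis minus_minus)
    ultimately have "ht (srefl \<delta> (- x)) > 0" using key_U d U_neg[OF x] by blast
    then show False using a by (simp add: srefl_linear linear_neg ht_neg)
  qed
qed

lemma flip_opp: assumes d: "\<delta> \<in> B" and x: "x = sgn \<delta> \<or> x = - sgn \<delta>"
  shows "ht (srefl \<delta> x) = - ht x"
  using x srefl_sgn_self[OF d] by (auto simp: srefl_linear linear_neg ht_neg)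

lemma Ninv_step: assumes w: "w \<in> W" and d: "\<delta> \<in> B"
  shows "\<exists>u0. Ninv (srefl \<delta> \<circ> w) = (if u0 \<in> Ninv w then Ninv w - {u0} else insert u0 (Ninv w))"
proof -
  define e where "e = winv w (sgn \<delta>)"
  have eU: "e \<in> U" unfolding e_def using W_U winv(1)[OF w] U_sgn_B[OF d] by blast
  define u0 where "u0 = (if ht e > 0 then e else - e)"
  have u0U: "u0 \<in> U" using eU U_neg by (simp add: u0_def)
  have u0p: "ht u0 > 0" using U_ht_ne[OF eU] by (auto simp: u0_def ht_neg)
  have we: "w e = sgn \<delta>" unfolding e_def using winv_app(2)[OF w] .
  have wu0: "w u0 = sgn \<delta> \<or> w u0 = - sgn \<delta>" using we W_neg[OF w] by (simp add: u0_def)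
  have wx: "w u \<noteq> sgn \<delta> \<and> w u \<noteq> - sgn \<delta>" if "u \<in> U" "ht u > 0" "u \<noteq> u0" for u
  proof -
    have "w u = sgn \<delta> \<Longrightarrow> u = e" using winv_app(1)[OF w, of u] by (simp add: e_def)
    moreover have "w u = - sgn \<delta> \<Longrightarrow> u = - e"
      using winv_app(1)[OF w, of u] W_neg[OF winv(1)[OF w]] by (simp add: e_def)
    moreover have "u = e \<or> u = - e \<Longrightarrow> u = u0" using that(2) U_ht_ne[OF eU]
      by (auto simp: u0_def ht_neg)
    ultimately show ?thesis using that(3) by blast
  qed
  have mem: "u \<in> Ninv (srefl \<delta> \<circ> w) \<longleftrightarrow> (if u = u0 then u \<notin> Ninv w else u \<in> Ninv w)" for u
  proof (cases "u \<in> U \<and> ht u > 0")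
    case False then show ?thesis using u0U u0p by (auto simp: Ninv_def)
  next
    case True
    have xU: "w u \<in> U" using W_U[OF w] True by blast
    show ?thesis
    proof (cases "u = u0")
      case True
      have "ht (srefl \<delta> (w u)) = - ht (w u)" using flip_opp[OF d] wu0 True by blast
      then show ?thesis using True U_ht_ne[OF xU] u0U u0p by (auto simp: Ninv_def)
    next
      case False
      have "ht (srefl \<delta> (w u)) > 0 \<longleftrightarrow> ht (w u) > 0" using flip_same[OF d xU] wx True False by blast
      moreover have "ht (srefl \<delta> (w u)) \<noteq> 0" using U_ht_ne srefl_U[OF d xU] by blast
      ultimately show ?thesis using True False U_ht_ne[OF xU] by (auto simp: Ninv_def)
    qed
  qed
  have "Ninv (srefl \<delta> \<circ> w) = (if u0 \<in> Ninv w then Ninv w - {u0} else insert u0 (Ninv w))"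
    by (auto simp: mem split: if_splits)
  then show ?thesis by blast
qed

lemma finNinv: "finite (Ninv w)" using finU by (simp add: Ninv_def)

lemma Ninv_parity_step: "w \<in> W \<Longrightarrow> \<delta> \<in> B \<Longrightarrow> even (card (Ninv (srefl \<delta> \<circ> w)) + card (Ninv w) + 1)"
proof -
  assume w: "w \<in> W" and d: "\<delta> \<in> B"
  obtain u0 where u0: "Ninv (srefl \<delta> \<circ> w) = (if u0 \<in> Ninv w then Ninv w - {u0} else insert u0 (Ninv w))"
    using Ninv_step[OF w d] by blast
  show ?thesis
  proof (cases "u0 \<in> Ninv w")
    case True
    then have "card (Ninv (srefl \<delta> \<circ> w)) + 1 = card (Ninv w)" using u0 finNinv
      by (simp add: card_Diff_singleton) (metis card_0_eq empty_iff finNinv Suc_pred neq0_conv)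
    then have e: "card (Ninv (srefl \<delta> \<circ> w)) + card (Ninv w) + 1 = 2 * card (Ninv w)" by linarith
    show ?thesis unfolding e by simp
  next
    case False
    then have "card (Ninv (srefl \<delta> \<circ> w)) = card (Ninv w) + 1" using u0 finNinv by simp
    then have e: "card (Ninv (srefl \<delta> \<circ> w)) + card (Ninv w) + 1 = 2 * (card (Ninv w) + 1)" by (simp add: algebra_simps)
    show ?thesis unfolding e by simp
  qed
qed

lemma Ninv_id: "Ninv id = {}" by (auto simp: Ninv_def)

lemma parity_wd: "set ss \<subseteq> S \<Longrightarrow> even (card (Ninv (wd ss)) + length ss)"
proof (induction ss)
  case Nil
  have "Ninv (\<lambda>a. a) = {}" by (auto simp: Ninv_def)
  then show ?case by simp
next
  case (Cons s ss)
  obtain \<delta> where d: "\<delta> \<in> B" "s = srefl \<delta>" using Cons.prems by (auto simp: simple_refls_def)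
  have w: "wd ss \<in> W" using wd_W Cons.prems by simp
  have f1: "even (card (Ninv (srefl \<delta> \<circ> wd ss)) + card (Ninv (wd ss)) + 1)" by (rule Ninv_parity_step[OF w d(1)])
  have f2: "even (card (Ninv (wd ss)) + length ss)" using Cons by simp
  have f3: "card (Ninv (wd (s # ss))) = card (Ninv (srefl \<delta> \<circ> wd ss))" by (simp only: wd_Cons d(2))
  have L: "\<And>a b n c::nat. even (a + b + 1) \<Longrightarrow> even (b + n) \<Longrightarrow> c = a \<Longrightarrow> even (c + (n + 1))"
    by (auto simp: even_add)
  show ?case using L[OF f1 f2 f3] by (simp only: length_Cons Suc_eq_plus1)
qed

lemma len_parity: "w \<in> W \<Longrightarrow> set ss \<subseteq> S \<Longrightarrow> w = wd ss \<Longrightarrow> even (len w + length ss)"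
proof -
  assume w: "w \<in> W" and ss: "set ss \<subseteq> S" "w = wd ss"
  obtain ts where ts: "set ts \<subseteq> S" "length ts = len w" "w = wd ts" using len_word[OF w] by blast
  have "even (card (Ninv w) + length ss)" using parity_wd[OF ss(1)] ss(2) by simp
  moreover have "even (card (Ninv w) + length ts)" using parity_wd[OF ts(1)] ts(3) by simp
  ultimately show ?thesis using ts(2) by (auto simp: even_add)
qed

lemma refl_len_ne: assumes w: "w \<in> W" and b: "\<beta> \<in> R" shows "len (w \<circ> srefl \<beta>) \<noteq> len w"
proof -
  obtain ss where ss: "set ss \<subseteq> S" "length ss = len w" "w = wd ss" using len_word[OF w] by blast
  obtain ts where ts: "set ts \<subseteq> S" "odd (length ts)" "srefl \<beta> = wd ts" using refl_word[OF b] by blast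
  have "w \<circ> srefl \<beta> = wd (ss @ ts)" using ss ts by (simp add: wd_append)
  then have "even (len (w \<circ> srefl \<beta>) + length (ss @ ts))"
    using len_parity[OF W_comp[OF w W_srefl[OF b]]] ss ts by simp
  then show ?thesis using ss(2) ts(2) by auto
qed

lemma refl_len_ne_left: assumes w: "w \<in> W" and b: "\<beta> \<in> R" shows "len (srefl \<beta> \<circ> w) \<noteq> len w"
  using refl_len_ne[OF winv(1)[OF w] b] len_left_eq[OF w b] len_winv[OF w] by simp

lemma srefl_conj_simple: assumes d: "\<delta> \<in> B"
  shows "srefl (srefl \<delta> \<beta>) = srefl \<delta> \<circ> srefl \<beta> \<circ> srefl \<delta>"
proof -
  have o: "orth (srefl \<delta>)" using orth_srefl B_nz[OF d] by blast
  have "srefl \<delta> \<circ> srefl \<beta> = srefl (srefl \<delta> \<beta>) \<circ> srefl \<delta>" using srefl_conj_fun[OF o] .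
  then have "srefl \<delta> \<circ> srefl \<beta> \<circ> srefl \<delta> = srefl (srefl \<delta> \<beta>) \<circ> srefl \<delta> \<circ> srefl \<delta>" by simp
  also have "\<dots> = srefl (srefl \<delta> \<beta>)" by (rule comp_srefl_srefl[OF B_R[OF d]])
  finally show ?thesis by simp
qed

lemma RC1: "w \<in> W \<Longrightarrow> \<beta> \<in> Pos \<Longrightarrow> len w < len (w \<circ> srefl \<beta>) \<Longrightarrow> w \<beta> \<in> Pos"
proof (induction "len w" arbitrary: w \<beta> rule: less_induct)
  case less
  note w = less.prems(1) and bP = less.prems(2) and lt = less.prems(3)
  show ?case
  proof (cases "len w = 0")
    case True then show ?thesis using len_zero[OF w] bP by simp
  next
    case False
    then obtain \<delta> where d: "\<delta> \<in> B" "len (w \<circ> srefl \<delta>) < len w" using right_descent[OF w] by blast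
    show ?thesis
    proof (cases "\<exists>c. \<beta> = c *\<^sub>R \<delta>")
      case True
      then obtain c where c: "\<beta> = c *\<^sub>R \<delta>" by blast
      then have "c \<noteq> 0" using bP PosR zR by auto
      then have "srefl \<beta> = srefl \<delta>" using c srefl_scaleR_root by simp
      then show ?thesis using lt d by simp
    next
      case False
      define \<beta>' where "\<beta>' = srefl \<delta> \<beta>"
      have b'P: "\<beta>' \<in> Pos" unfolding \<beta>'_def by (rule key[OF bP d(1) False])
      define w' where "w' = w \<circ> srefl \<delta>"
      have w': "w' \<in> W" unfolding w'_def by (rule W_comp[OF w W_srefl[OF B_R[OF d(1)]]])
      have bR: "\<beta> \<in> R" using bP PosR by blast
      have e: "w' \<circ> srefl \<beta>' = w \<circ> srefl \<beta> \<circ> srefl \<delta>"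
        unfolding w'_def \<beta>'_def srefl_conj_simple[OF d(1)]
        by (simp add: comp_assoc srefl_srefl_comp[OF B_R[OF d(1)]])
      have "len (w \<circ> srefl \<beta>) \<le> len (w \<circ> srefl \<beta> \<circ> srefl \<delta>) + 1"
        by (rule len_right_ge[OF W_comp[OF w W_srefl[OF bR]] d(1)])
      moreover have "len (w' \<circ> srefl \<beta>') = len (w \<circ> srefl \<beta> \<circ> srefl \<delta>)" using e by simp
      ultimately have "len w' < len (w' \<circ> srefl \<beta>')" using lt d(2) unfolding w'_def by linarith
      then have "w' \<beta>' \<in> Pos" using less.hyps[OF _ w' b'P] d(2) unfolding w'_def by blast
      moreover have "w' \<beta>' = w \<beta>" unfolding w'_def \<beta>'_def using srefl_invol_R[OF B_R[OF d(1)]] by simp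
      ultimately show ?thesis by simp
    qed
  qed
qed

lemma RC_right: assumes w: "w \<in> W" and bP: "\<beta> \<in> Pos"
  shows "len w < len (w \<circ> srefl \<beta>) \<longleftrightarrow> w \<beta> \<in> Pos"
proof
  assume "len w < len (w \<circ> srefl \<beta>)" then show "w \<beta> \<in> Pos" using RC1 w bP by blast
next
  assume p: "w \<beta> \<in> Pos"
  have bR: "\<beta> \<in> R" using bP PosR by blast
  show "len w < len (w \<circ> srefl \<beta>)"
  proof (rule ccontr)
    assume "\<not> ?thesis"
    then have lt: "len (w \<circ> srefl \<beta>) < len w" using refl_len_ne[OF w bR] by linarith
    define w' where "w' = w \<circ> srefl \<beta>"
    have w': "w' \<in> W" unfolding w'_def by (rule W_comp[OF w W_srefl[OF bR]])
    have "w' \<circ> srefl \<beta> = w" unfolding w'_def by (rule comp_srefl_srefl[OF bR])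
    then have "len w' < len (w' \<circ> srefl \<beta>)" using lt by (simp add: w'_def)
    then have "w' \<beta> \<in> Pos" using RC1[OF w' bP] by blast
    moreover have "w' \<beta> = - w \<beta>" unfolding w'_def using srefl_self[OF root_nz[OF bR]] W_neg[OF w] by simp
    ultimately show False using not_both[OF p] by simp
  qed
qed

lemma RC_left: assumes w: "w \<in> W" and bP: "\<beta> \<in> Pos"
  shows "len w < len (srefl \<beta> \<circ> w) \<longleftrightarrow> winv w \<beta> \<in> Pos"
proof -
  have bR: "\<beta> \<in> R" using bP PosR by blast
  have e1: "len (srefl \<beta> \<circ> w) = len (winv w \<circ> srefl \<beta>)" by (rule len_left_eq[OF w bR])
  have e2: "len w = len (winv w)" by (rule len_winv[OF w, symmetric])
  show ?thesis unfolding e1 e2 by (rule RC_right[OF winv(1)[OF w] bP])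
qed

end


context rsys begin

abbreviation bstep where "bstep \<equiv> bruhat_step R B"
abbreviation br where "br \<equiv> (bruhat_step R B)\<^sup>*\<^sup>*"

lemma step_pos: "bstep u w \<Longrightarrow> \<exists>\<beta>\<in>Pos. w = srefl \<beta> \<circ> u \<and> len u < len w"
proof -
  assume "bstep u w"
  then obtain \<alpha> where a: "\<alpha> \<in> R" "w = srefl \<alpha> \<circ> u" "len u < len w" by (auto simp: bruhat_step_def)
  show ?thesis
  proof (cases "\<alpha> \<in> Pos")
    case True then show ?thesis using a by blast
  next
    case False
    then have "- \<alpha> \<in> Pos" using neg_Pos_iff a(1) by blast
    then show ?thesis using a srefl_neg[of \<alpha>] by metis
  qed
qed

lemma stepI: "\<beta> \<in> R \<Longrightarrow> len u < len (srefl \<beta> \<circ> u) \<Longrightarrow> bstep u (srefl \<beta> \<circ> u)"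
  by (auto simp: bruhat_step_def)

lemma step_W: "u \<in> W \<Longrightarrow> bstep u w \<Longrightarrow> w \<in> W"
  by (auto simp: bruhat_step_def intro: W_comp W_srefl)

lemma br_W: "br u w \<Longrightarrow> u \<in> W \<Longrightarrow> w \<in> W"
  by (induction rule: rtranclp_induct) (auto intro: step_W)

lemma conj_left:
  assumes u: "u \<in> W" and bP: "\<beta> \<in> Pos" and d: "\<delta> \<in> B" and lt: "len u < len (srefl \<beta> \<circ> u)"
  shows "srefl \<beta> = srefl \<delta> \<or> bstep (srefl \<delta> \<circ> u) (srefl \<delta> \<circ> (srefl \<beta> \<circ> u))"
proof (cases "\<exists>c. \<beta> = c *\<^sub>R \<delta>")
  case True
  then obtain c where c: "\<beta> = c *\<^sub>R \<delta>" by blast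
  then have "c \<noteq> 0" using bP PosR zR by auto
  then have "srefl \<beta> = srefl \<delta>" using c srefl_scaleR_root by simp
  then show ?thesis by blast
next
  case False
  define \<beta>' where "\<beta>' = srefl \<delta> \<beta>"
  have b'P: "\<beta>' \<in> Pos" unfolding \<beta>'_def by (rule key[OF bP d False])
  have dR: "\<delta> \<in> R" by (rule B_R[OF d])
  have e: "srefl \<delta> \<circ> (srefl \<beta> \<circ> u) = srefl \<beta>' \<circ> (srefl \<delta> \<circ> u)"
    unfolding \<beta>'_def srefl_conj_simple[OF d] by (simp add: comp_assoc srefl_srefl_comp[OF dR])
  have su: "srefl \<delta> \<circ> u \<in> W" by (rule W_comp[OF W_srefl[OF dR] u])
  have "winv u \<beta> \<in> Pos" using RC_left[OF u bP] lt by blast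
  moreover have "winv (srefl \<delta> \<circ> u) \<beta>' = winv u \<beta>"
    unfolding winv_comp_srefl[OF u dR] \<beta>'_def by (simp add: srefl_invol_R[OF dR])
  ultimately have "len (srefl \<delta> \<circ> u) < len (srefl \<beta>' \<circ> (srefl \<delta> \<circ> u))"
    using RC_left[OF su b'P] by simp
  then have "bstep (srefl \<delta> \<circ> u) (srefl \<beta>' \<circ> (srefl \<delta> \<circ> u))" using stepI PosR[OF b'P] by blast
  then show ?thesis using e by simp
qed

lemma conj_right:
  assumes u: "u \<in> W" and bP: "\<beta> \<in> Pos" and d: "\<delta> \<in> B" and lt: "len u < len (srefl \<beta> \<circ> u)"
  shows "srefl \<beta> \<circ> u = u \<circ> srefl \<delta> \<or> bstep (u \<circ> srefl \<delta>) (srefl \<beta> \<circ> (u \<circ> srefl \<delta>))"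
proof -
  define \<gamma> where "\<gamma> = winv u \<beta>"
  have gP: "\<gamma> \<in> Pos" using RC_left[OF u bP] lt by (simp add: \<gamma>_def)
  have dR: "\<delta> \<in> R" by (rule B_R[OF d])
  show ?thesis
  proof (cases "\<exists>c. \<gamma> = c *\<^sub>R \<delta>")
    case True
    then obtain c where c: "\<gamma> = c *\<^sub>R \<delta>" by blast
    then have "c \<noteq> 0" using gP PosR zR by auto
    then have sg: "srefl \<gamma> = srefl \<delta>" using c srefl_scaleR_root by simp
    have "u \<circ> srefl \<gamma> = srefl (u \<gamma>) \<circ> u" using srefl_conj_fun W_orth[OF u] by blast
    moreover have "u \<gamma> = \<beta>" unfolding \<gamma>_def by (rule winv_app(2)[OF u])
    ultimately show ?thesis using sg by simp
  next
    case False
    have sgP: "srefl \<delta> \<gamma> \<in> Pos" by (rule key[OF gP d False])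
    have us: "u \<circ> srefl \<delta> \<in> W" by (rule W_comp[OF u W_srefl[OF dR]])
    have "winv (u \<circ> srefl \<delta>) = srefl \<delta> \<circ> winv u"
      using winv_comp[OF u W_srefl[OF dR]] winv_srefl[OF dR] by simp
    then have "winv (u \<circ> srefl \<delta>) \<beta> \<in> Pos" using sgP by (simp add: \<gamma>_def)
    then have "len (u \<circ> srefl \<delta>) < len (srefl \<beta> \<circ> (u \<circ> srefl \<delta>))" using RC_left[OF us bP] by blast
    then show ?thesis using stepI PosR[OF bP] by blast
  qed
qed

lemma Z_left:
  assumes "br u w" and "u \<in> W" and d: "\<delta> \<in> B" and lw: "len w < len (srefl \<delta> \<circ> w)"
  shows "br (srefl \<delta> \<circ> u) (srefl \<delta> \<circ> w)"
  using assms(1,2)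
proof (induction rule: converse_rtranclp_induct)
  case base then show ?case by simp
next
  case (step u u1)
  have u1W: "u1 \<in> W" using step_W step by blast
  have IH: "br (srefl \<delta> \<circ> u1) (srefl \<delta> \<circ> w)" using step.IH u1W by blast
  obtain \<beta> where b: "\<beta> \<in> Pos" "u1 = srefl \<beta> \<circ> u" "len u < len u1" using step_pos[OF step.hyps(1)] by blast
  have "srefl \<beta> = srefl \<delta> \<or> bstep (srefl \<delta> \<circ> u) (srefl \<delta> \<circ> (srefl \<beta> \<circ> u))"
    using conj_left[OF step.prems b(1) d] b by simp
  then show ?case
  proof
    assume "srefl \<beta> = srefl \<delta>"
    then have e: "srefl \<delta> \<circ> u = u1" using b by simp
    have "bstep w (srefl \<delta> \<circ> w)" using stepI[OF B_R[OF d] lw] .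
    then show ?thesis unfolding e by (rule rtranclp.rtrancl_into_rtrancl[OF step.hyps(2)])
  next
    assume "bstep (srefl \<delta> \<circ> u) (srefl \<delta> \<circ> (srefl \<beta> \<circ> u))"
    then have "bstep (srefl \<delta> \<circ> u) (srefl \<delta> \<circ> u1)" using b by simp
    then show ?thesis using IH by (rule converse_rtranclp_into_rtranclp)
  qed
qed

lemma comp_srefl_as_left: "a \<in> W \<Longrightarrow> \<delta> \<in> R \<Longrightarrow> a \<circ> srefl \<delta> = srefl (a \<delta>) \<circ> a"
  using srefl_conj_fun W_orth by blast

lemma lift_right:
  assumes "br a w" and "a \<in> W" and d: "\<delta> \<in> B" and lw: "len (w \<circ> srefl \<delta>) < len w"
  shows "br a (w \<circ> srefl \<delta>) \<or> (len (a \<circ> srefl \<delta>) < len a \<and> br (a \<circ> srefl \<delta>) (w \<circ> srefl \<delta>))"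
  using assms(1,2)
proof (induction rule: converse_rtranclp_induct)
  case base show ?case using lw by (blast intro: rtranclp.rtrancl_refl)
next
  case (step a a1)
  have dR: "\<delta> \<in> R" by (rule B_R[OF d])
  have a1W: "a1 \<in> W" using step_W step by blast
  have IH: "br a1 (w \<circ> srefl \<delta>) \<or> (len (a1 \<circ> srefl \<delta>) < len a1 \<and> br (a1 \<circ> srefl \<delta>) (w \<circ> srefl \<delta>))"
    using step.IH a1W by blast
  obtain \<beta> where b: "\<beta> \<in> Pos" "a1 = srefl \<beta> \<circ> a" "len a < len a1" using step_pos[OF step.hyps(1)] by blast
  have st: "bstep a a1" by (rule step.hyps(1))
  have c: "srefl \<beta> \<circ> a = a \<circ> srefl \<delta> \<or> bstep (a \<circ> srefl \<delta>) (srefl \<beta> \<circ> (a \<circ> srefl \<delta>))"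
    using conj_right[OF step.prems b(1) d] b by simp
  show ?case
  proof (cases "srefl \<beta> \<circ> a = a \<circ> srefl \<delta>")
    case True
    then have e: "a1 = a \<circ> srefl \<delta>" using b by simp
    then have e2: "a1 \<circ> srefl \<delta> = a" using comp_srefl_srefl[OF dR] by simp
    from IH show ?thesis
    proof
      assume "br a1 (w \<circ> srefl \<delta>)"
      then show ?thesis using st by (blast intro: converse_rtranclp_into_rtranclp)
    next
      assume "len (a1 \<circ> srefl \<delta>) < len a1 \<and> br (a1 \<circ> srefl \<delta>) (w \<circ> srefl \<delta>)"
      then have "br a (w \<circ> srefl \<delta>)" using e2 by simp
      then show ?thesis by blast
    qed
  next
    case False
    then have st2: "bstep (a \<circ> srefl \<delta>) (a1 \<circ> srefl \<delta>)" using c b by (simp add: comp_assoc)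
    from IH show ?thesis
    proof
      assume "br a1 (w \<circ> srefl \<delta>)"
      then show ?thesis using st by (blast intro: converse_rtranclp_into_rtranclp)
    next
      assume "len (a1 \<circ> srefl \<delta>) < len a1 \<and> br (a1 \<circ> srefl \<delta>) (w \<circ> srefl \<delta>)"
      then have br2: "br (a \<circ> srefl \<delta>) (w \<circ> srefl \<delta>)" using st2 by (blast intro: converse_rtranclp_into_rtranclp)
      show ?thesis
      proof (cases "len (a \<circ> srefl \<delta>) < len a")
        case True then show ?thesis using br2 by blast
      next
        case False
        then have "len a < len (a \<circ> srefl \<delta>)" using refl_len_ne[OF step.prems dR] by linarith
        moreover have "a \<circ> srefl \<delta> = srefl (a \<delta>) \<circ> a" by (rule comp_srefl_as_left[OF step.prems dR])
        ultimately have "bstep a (a \<circ> srefl \<delta>)" using stepI[OF W_R[OF step.prems dR]] by simp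
        then show ?thesis using br2 by (blast intro: converse_rtranclp_into_rtranclp)
      qed
    qed
  qed
qed

end


context rsys begin

abbreviation DW where "DW \<equiv> dom_weights R B"

lemma inner_expansion: "\<nu> \<bullet> \<gamma> = (\<Sum>\<delta>\<in>B. coef \<delta> \<gamma> * (\<nu> \<bullet> \<delta>))"
  by (subst expansion) (simp add: inner_sum_right)

lemma dom_B: "\<nu> \<in> DW \<Longrightarrow> \<delta> \<in> B \<Longrightarrow> \<nu> \<bullet> \<delta> \<ge> 0"
  using B_Pos by (auto simp: dom_weights_def)

lemma dom_Pos: "\<nu> \<in> DW \<Longrightarrow> \<gamma> \<in> Pos \<Longrightarrow> \<nu> \<bullet> \<gamma> \<ge> 0"
  by (auto simp: dom_weights_def)

lemma domI_B: assumes "\<nu> \<in> weights R" "\<forall>\<delta>\<in>B. \<nu> \<bullet> \<delta> \<ge> 0" shows "\<nu> \<in> DW"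
proof -
  have "\<nu> \<bullet> \<gamma> \<ge> 0" if "\<gamma> \<in> Pos" for \<gamma>
  proof -
    have "\<forall>\<delta>\<in>B. coef \<delta> \<gamma> \<ge> 0" using that by (simp add: Pos_iff)
    then show ?thesis using assms(2) by (subst inner_expansion) (intro sum_nonneg, simp)
  qed
  then show ?thesis using assms(1) by (auto simp: dom_weights_def)
qed

lemma dom_pos: "\<nu> \<in> DW \<Longrightarrow> \<gamma> \<in> R \<Longrightarrow> \<nu> \<bullet> \<gamma> > 0 \<Longrightarrow> \<gamma> \<in> Pos"
proof (rule ccontr)
  assume a: "\<nu> \<in> DW" "\<gamma> \<in> R" "\<nu> \<bullet> \<gamma> > 0" "\<gamma> \<notin> Pos"
  then have "- \<gamma> \<in> Pos" using neg_Pos_iff[OF a(2)] by simp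
  then have "\<nu> \<bullet> (- \<gamma>) \<ge> 0" using dom_Pos a(1) by blast
  then show False using a(3) by simp
qed

definition Dset where "Dset \<mu> = {\<gamma>\<in>Pos. \<mu> \<bullet> \<gamma> < 0}"

lemma finDset: "finite (Dset \<mu>)"
  using finR by (rule finite_subset[rotated]) (auto simp: Dset_def PosR)

lemma dom_exists: "\<mu> \<in> weights R \<Longrightarrow> \<exists>x\<in>W. x \<mu> \<in> DW"
proof (induction "card (Dset \<mu>)" arbitrary: \<mu> rule: less_induct)
  case less
  show ?case
  proof (cases "\<forall>\<delta>\<in>B. \<mu> \<bullet> \<delta> \<ge> 0")
    case True
    then have "\<mu> \<in> DW" using domI_B less.prems by blast
    show ?thesis
    proof (rule bexI[of _ id])
      show "id \<mu> \<in> DW" using \<open>\<mu> \<in> DW\<close> by simp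
    qed (rule W_id)
  next
    case False
    then obtain \<delta> where d: "\<delta> \<in> B" "\<mu> \<bullet> \<delta> < 0" by (auto simp: not_le)
    have dR: "\<delta> \<in> R" by (rule B_R[OF d(1)])
    define \<mu>' where "\<mu>' = srefl \<delta> \<mu>"
    have m'w: "\<mu>' \<in> weights R" unfolding \<mu>'_def by (rule weights_srefl[OF less.prems dR])
    have sub: "Dset \<mu>' \<subseteq> srefl \<delta> ` (Dset \<mu> - {\<delta>})"
    proof
      fix \<gamma> assume g: "\<gamma> \<in> Dset \<mu>'"
      then have gP: "\<gamma> \<in> Pos" and neg: "\<mu>' \<bullet> \<gamma> < 0" by (auto simp: Dset_def)
      have e: "\<mu>' \<bullet> \<gamma> = \<mu> \<bullet> srefl \<delta> \<gamma>" unfolding \<mu>'_def by (rule srefl_sym)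
      have np: "\<not> (\<exists>c. \<gamma> = c *\<^sub>R \<delta>)"
      proof
        assume "\<exists>c. \<gamma> = c *\<^sub>R \<delta>"
        then obtain c where c: "\<gamma> = c *\<^sub>R \<delta>" by blast
        then have cp: "c > 0" using prop_pos gP d(1) by blast
        have "\<mu>' \<bullet> \<gamma> = \<mu> \<bullet> srefl \<delta> (c *\<^sub>R \<delta>)" using e c by simp
        also have "\<dots> = c * (\<mu> \<bullet> srefl \<delta> \<delta>)" by (simp add: srefl_scale)
        also have "\<dots> = - c * (\<mu> \<bullet> \<delta>)" using srefl_self[OF B_nz[OF d(1)]] by simp
        finally have "\<mu>' \<bullet> \<gamma> > 0" using cp d(2) by (simp add: mult_pos_neg)
        then show False using neg by simp
      qed
      have sgP: "srefl \<delta> \<gamma> \<in> Pos" by (rule key[OF gP d(1) np])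
      have "srefl \<delta> \<gamma> \<noteq> \<delta>"
      proof
        assume "srefl \<delta> \<gamma> = \<delta>"
        then have "srefl \<delta> (srefl \<delta> \<gamma>) = srefl \<delta> \<delta>" by simp
        then have "\<gamma> = srefl \<delta> \<delta>" using srefl_invol_R[OF dR] by simp
        then have "\<gamma> = - \<delta>" using srefl_self[OF B_nz[OF d(1)]] by simp
        then show False using not_both[OF B_Pos[OF d(1)]] gP by simp
      qed
      then have "srefl \<delta> \<gamma> \<in> Dset \<mu> - {\<delta>}" using sgP neg e by (simp add: Dset_def)
      moreover have "\<gamma> = srefl \<delta> (srefl \<delta> \<gamma>)" using srefl_invol_R[OF dR] by simp
      ultimately show "\<gamma> \<in> srefl \<delta> ` (Dset \<mu> - {\<delta>})" by blast
    qed
    have dD: "\<delta> \<in> Dset \<mu>" using B_Pos[OF d(1)] d(2) by (simp add: Dset_def)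
    have "card (Dset \<mu>') \<le> card (srefl \<delta> ` (Dset \<mu> - {\<delta>}))"
      by (rule card_mono[OF _ sub]) (simp add: finDset)
    also have "\<dots> \<le> card (Dset \<mu> - {\<delta>})" by (rule card_image_le) (simp add: finDset)
    also have "\<dots> < card (Dset \<mu>)" by (rule card_Diff1_less[OF finDset dD])
    finally obtain x' where x': "x' \<in> W" "x' \<mu>' \<in> DW" using less.hyps m'w by blast
    then show ?thesis using W_comp[OF x'(1) W_srefl[OF dR]] by (intro bexI[of _ "x' \<circ> srefl \<delta>"]) (auto simp: \<mu>'_def)
  qed
qed

lemma left_descent: assumes x: "x \<in> W" and l: "len x > 0"
  shows "\<exists>\<delta>\<in>B. len (srefl \<delta> \<circ> x) < len x"
proof -
  have xi: "winv x \<in> W" by (rule winv(1)[OF x])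
  have "len (winv x) > 0" using l len_winv[OF x] by simp
  then obtain \<delta> where d: "\<delta> \<in> B" "len (winv x \<circ> srefl \<delta>) < len (winv x)" using right_descent[OF xi] by blast
  then have "len (srefl \<delta> \<circ> x) < len x" using len_left_eq[OF x B_R[OF d(1)]] len_winv[OF x] by simp
  then show ?thesis using d(1) by blast
qed

lemma dom_unique: "\<nu> \<in> DW \<Longrightarrow> \<nu>' \<in> DW \<Longrightarrow> x \<in> W \<Longrightarrow> x \<nu> = \<nu>' \<Longrightarrow> \<nu>' = \<nu>"
proof (induction "len x" arbitrary: x rule: less_induct)
  case less
  note x = less.prems(3)
  show ?case
  proof (cases "len x = 0")
    case True then show ?thesis using len_zero[OF x] less.prems by simp
  next
    case False
    then obtain \<delta> where d: "\<delta> \<in> B" "len (srefl \<delta> \<circ> x) < len x" using left_descent[OF x] by blast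
    have dR: "\<delta> \<in> R" by (rule B_R[OF d(1)])
    have "winv x \<delta> \<notin> Pos" using len_left_lt_iff[OF x d(1)] d(2) by blast
    then have nP: "- winv x \<delta> \<in> Pos" using neg_Pos_iff[OF W_R[OF winv(1)[OF x] dR]] by simp
    have "\<nu>' \<bullet> \<delta> = x \<nu> \<bullet> \<delta>" using less.prems(4) by simp
    also have "\<dots> = \<nu> \<bullet> winv x \<delta>" by (rule W_inner_winv[OF x])
    finally have "\<nu>' \<bullet> \<delta> = \<nu> \<bullet> winv x \<delta>" .
    moreover have "\<nu> \<bullet> (- winv x \<delta>) \<ge> 0" using dom_Pos[OF less.prems(1) nP] .
    ultimately have "\<nu>' \<bullet> \<delta> \<le> 0" by simp
    then have "\<nu>' \<bullet> \<delta> = 0" using dom_B[OF less.prems(2) d(1)] by simp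
    then have "srefl \<delta> \<nu>' = \<nu>'" by (rule srefl_orth)
    then have "(srefl \<delta> \<circ> x) \<nu> = \<nu>'" using less.prems(4) by simp
    then show ?thesis using less.hyps[OF d(2) less.prems(1,2) W_comp[OF W_srefl[OF dR] x]] by blast
  qed
qed

lemma dom_rep_props: assumes m: "\<mu> \<in> weights R"
  shows "dom_rep R B \<mu> \<in> DW" "\<exists>x\<in>W. x \<mu> = dom_rep R B \<mu>"
proof -
  obtain x where x: "x \<in> W" "x \<mu> \<in> DW" using dom_exists[OF m] by blast
  have uniq: "\<nu> = x \<mu>" if a1: "\<nu> \<in> (\<lambda>w. w \<mu>) ` W" and a2: "\<nu> \<in> DW" for \<nu>
  proof -
    obtain y where y: "y \<in> W" "\<nu> = y \<mu>" using a1 by blast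
    have "(y \<circ> winv x) (x \<mu>) = \<nu>" using y winv_app(1)[OF x(1)] by simp
    then show ?thesis using dom_unique[OF x(2) a2 W_comp[OF y(1) winv(1)[OF x(1)]]] by simp
  qed
  have "dom_rep R B \<mu> = x \<mu>" unfolding dom_rep_def
  proof (rule the_equality)
    show "x \<mu> \<in> (\<lambda>w. w \<mu>) ` W \<and> x \<mu> \<in> DW" using x by blast
  next
    fix \<nu> assume "\<nu> \<in> (\<lambda>w. w \<mu>) ` W \<and> \<nu> \<in> DW"
    then show "\<nu> = x \<mu>" using uniq by blast
  qed
  then show "dom_rep R B \<mu> \<in> DW" "\<exists>x\<in>W. x \<mu> = dom_rep R B \<mu>" using x by auto
qed

lemma dom_rep_eq: assumes m: "\<mu> \<in> weights R" and n: "\<nu> \<in> DW" and x: "x \<in> W" "x \<mu> = \<nu>"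
  shows "dom_rep R B \<mu> = \<nu>"
proof -
  obtain y where y: "y \<in> W" "y \<mu> = dom_rep R B \<mu>" using dom_rep_props(2)[OF m] by blast
  have "(y \<circ> winv x) \<nu> = dom_rep R B \<mu>" using y x winv_app(1)[OF x(1)] by auto
  then show ?thesis using dom_unique[OF n dom_rep_props(1)[OF m] W_comp[OF y(1) winv(1)[OF x(1)]]] by simp
qed

lemma dom_rep_W: assumes m: "\<mu> \<in> weights R" and w: "w \<in> W" shows "dom_rep R B (w \<mu>) = dom_rep R B \<mu>"
proof -
  obtain x where x: "x \<in> W" "x \<mu> = dom_rep R B \<mu>" using dom_rep_props(2)[OF m] by blast
  have "(x \<circ> winv w) (w \<mu>) = dom_rep R B \<mu>" using x winv_app(1)[OF w] by simp
  then show ?thesis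
    using dom_rep_eq[OF W_weights[OF w m] dom_rep_props(1)[OF m] W_comp[OF x(1) winv(1)[OF w]]] by blast
qed

definition minl where "minl \<nu> x \<longleftrightarrow> (\<forall>\<delta>\<in>B. \<nu> \<bullet> \<delta> = 0 \<longrightarrow> x \<delta> \<in> Pos)"

lemma perp_coef: assumes n: "\<nu> \<in> DW" and g: "\<gamma> \<in> Pos" and z: "\<nu> \<bullet> \<gamma> = 0" and d: "\<delta> \<in> B"
  and c: "coef \<delta> \<gamma> > 0" shows "\<nu> \<bullet> \<delta> = 0"
proof -
  have nn: "\<forall>\<delta>\<in>B. coef \<delta> \<gamma> * (\<nu> \<bullet> \<delta>) \<ge> 0" using g dom_B[OF n] by (simp add: Pos_iff)
  have "(\<Sum>\<delta>\<in>B. coef \<delta> \<gamma> * (\<nu> \<bullet> \<delta>)) = 0" using z inner_expansion[of \<nu> \<gamma>] by linarith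
  moreover have "(\<Sum>\<delta>\<in>B. coef \<delta> \<gamma> * (\<nu> \<bullet> \<delta>)) = 0 \<longleftrightarrow> (\<forall>\<delta>\<in>B. coef \<delta> \<gamma> * (\<nu> \<bullet> \<delta>) = 0)"
    by (rule sum_nonneg_eq_0_iff[OF finB]) (use nn in simp)
  ultimately have "\<forall>\<delta>\<in>B. coef \<delta> \<gamma> * (\<nu> \<bullet> \<delta>) = 0" by simp
  then have "coef \<delta> \<gamma> = 0 \<or> \<nu> \<bullet> \<delta> = 0" using d by simp
  then show ?thesis using c by simp
qed

lemma ht_image: assumes x: "x \<in> W" shows "ht (x \<gamma>) = (\<Sum>\<delta>\<in>B. coef \<delta> \<gamma> * ht (x \<delta>))"
proof -
  have "x \<gamma> = x (\<Sum>\<delta>\<in>B. coef \<delta> \<gamma> *\<^sub>R \<delta>)" using expansion[of \<gamma>] by (rule arg_cong)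
  also have "\<dots> = (\<Sum>\<delta>\<in>B. coef \<delta> \<gamma> *\<^sub>R x \<delta>)" using W_linear[OF x] by (simp add: linear_sum linear_scale)
  finally show ?thesis by (simp add: ht_sum ht_scale)
qed

lemma Pos_coef_pos: "\<gamma> \<in> Pos \<Longrightarrow> \<exists>\<delta>\<in>B. coef \<delta> \<gamma> > 0"
proof (rule ccontr)
  assume g: "\<gamma> \<in> Pos" and "\<not> (\<exists>\<delta>\<in>B. coef \<delta> \<gamma> > 0)"
  then have "\<forall>\<delta>\<in>B. coef \<delta> \<gamma> = 0" by (force simp: Pos_iff)
  then have "\<gamma> = 0" using coef_eq_0 by blast
  then show False using g PosR zR by blast
qed

lemma perp_pos: assumes n: "\<nu> \<in> DW" and x: "x \<in> W" and m: "minl \<nu> x" and g: "\<gamma> \<in> Pos"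
  and z: "\<nu> \<bullet> \<gamma> = 0" shows "x \<gamma> \<in> Pos"
proof -
  have terms: "\<forall>\<delta>\<in>B. coef \<delta> \<gamma> * ht (x \<delta>) \<ge> 0 \<and> (coef \<delta> \<gamma> > 0 \<longrightarrow> coef \<delta> \<gamma> * ht (x \<delta>) > 0)"
  proof
    fix \<delta> assume d: "\<delta> \<in> B"
    show "coef \<delta> \<gamma> * ht (x \<delta>) \<ge> 0 \<and> (coef \<delta> \<gamma> > 0 \<longrightarrow> coef \<delta> \<gamma> * ht (x \<delta>) > 0)"
    proof (cases "coef \<delta> \<gamma> > 0")
      case True
      then have "\<nu> \<bullet> \<delta> = 0" using perp_coef[OF n g z d] by blast
      then have "x \<delta> \<in> Pos" using m d by (simp add: minl_def)
      then have "ht (x \<delta>) > 0" by (rule ht_Pos)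
      then show ?thesis using True by (simp add: mult_pos_pos less_imp_le)
    next
      case False
      have "coef \<delta> \<gamma> \<ge> 0" using g d by (simp add: Pos_iff)
      then have "coef \<delta> \<gamma> = 0" using False by simp
      then show ?thesis by simp
    qed
  qed
  obtain \<delta>0 where d0: "\<delta>0 \<in> B" "coef \<delta>0 \<gamma> > 0" using Pos_coef_pos[OF g] by blast
  have "(\<Sum>\<delta>\<in>B. coef \<delta> \<gamma> * ht (x \<delta>)) > 0"
  proof (rule sum_pos2[OF finB d0(1)])
    show "0 < coef \<delta>0 \<gamma> * ht (x \<delta>0)" using terms d0 by blast
  next
    fix i assume "i \<in> B" then show "0 \<le> coef i \<gamma> * ht (x i)" using terms by blast
  qed
  then have "ht (x \<gamma>) > 0" using ht_image[OF x, of \<gamma>] by simp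
  then show ?thesis using Pos_ht_iff[OF W_R[OF x PosR[OF g]]] by simp
qed

lemma minl_unique: assumes n: "\<nu> \<in> DW" and x: "x \<in> W" and y: "y \<in> W" and e: "x \<nu> = y \<nu>"
  and mx: "minl \<nu> x" and my: "minl \<nu> y" shows "x = y"
proof -
  define z where "z = winv x \<circ> y"
  have zW: "z \<in> W" unfolding z_def by (rule W_comp[OF winv(1)[OF x] y])
  have "z \<nu> = winv x (y \<nu>)" by (simp add: z_def)
  also have "\<dots> = winv x (x \<nu>)" using e by simp
  also have "\<dots> = \<nu>" by (rule winv_app(1)[OF x])
  finally have zn: "z \<nu> = \<nu>" .
  have "z \<gamma> \<in> Pos" if g: "\<gamma> \<in> Pos" for \<gamma>
  proof (cases "\<nu> \<bullet> \<gamma> > 0")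
    case True
    have "\<nu> \<bullet> z \<gamma> = \<nu> \<bullet> \<gamma>" using W_inner[OF zW, of \<nu> \<gamma>] zn by simp
    then show ?thesis using dom_pos[OF n W_R[OF zW PosR[OF g]]] True by simp
  next
    case False
    then have z0: "\<nu> \<bullet> \<gamma> = 0" using dom_Pos[OF n g] by simp
    define \<rho> where "\<rho> = y \<gamma>"
    have rP: "\<rho> \<in> Pos" unfolding \<rho>_def by (rule perp_pos[OF n y my g z0])
    define \<epsilon> where "\<epsilon> = winv x \<rho>"
    have eR: "\<epsilon> \<in> R" unfolding \<epsilon>_def using W_R[OF winv(1)[OF x] PosR[OF rP]] .
    have xe: "x \<epsilon> = \<rho>" unfolding \<epsilon>_def by (rule winv_app(2)[OF x])
    have "\<nu> \<bullet> \<epsilon> = x \<nu> \<bullet> x \<epsilon>" using W_inner[OF x] by simp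
    also have "\<dots> = y \<nu> \<bullet> y \<gamma>" using e xe by (simp add: \<rho>_def)
    also have "\<dots> = 0" using W_inner[OF y] z0 by simp
    finally have ez: "\<nu> \<bullet> \<epsilon> = 0" .
    have "\<epsilon> \<in> Pos"
    proof (rule ccontr)
      assume "\<epsilon> \<notin> Pos"
      then have mP: "- \<epsilon> \<in> Pos" using neg_Pos_iff[OF eR] by simp
      have "x (- \<epsilon>) \<in> Pos" by (rule perp_pos[OF n x mx mP]) (simp add: ez)
      then have "- \<rho> \<in> Pos" using xe W_neg[OF x] by simp
      then show False using not_both[OF rP] by simp
    qed
    then show ?thesis by (simp add: z_def \<epsilon>_def \<rho>_def)
  qed
  then have "z = id" by (rule pos_pres_id[OF zW])
  then have "x \<circ> z = x" by simp
  moreover have "x \<circ> z = y" unfolding z_def using winv(3)[OF x] by (simp add: comp_assoc[symmetric])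
  ultimately show ?thesis by simp
qed

lemma minimal_minl: assumes n: "\<nu> \<in> DW" and y: "y \<in> W"
  and mn: "\<And>y'. y' \<in> W \<Longrightarrow> y' \<nu> = y \<nu> \<Longrightarrow> len y \<le> len y'" shows "minl \<nu> y"
  unfolding minl_def
proof (intro ballI impI)
  fix \<delta> assume d: "\<delta> \<in> B" and z: "\<nu> \<bullet> \<delta> = 0"
  show "y \<delta> \<in> Pos"
  proof (rule ccontr)
    assume "y \<delta> \<notin> Pos"
    then have lt: "len (y \<circ> srefl \<delta>) < len y" using len_right_lt[OF y d] by blast
    have "(y \<circ> srefl \<delta>) \<nu> = y \<nu>" using srefl_orth[OF z] by simp
    then have "len y \<le> len (y \<circ> srefl \<delta>)" using mn W_comp[OF y W_srefl[OF B_R[OF d]]] by blast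
    then show False using lt by simp
  qed
qed

end


context rsys begin

lemma vbar_props: assumes m: "\<mu> \<in> weights R"
  shows "vbar R B \<mu> \<in> W" "vbar R B \<mu> (dom_rep R B \<mu>) = \<mu>" "minl (dom_rep R B \<mu>) (vbar R B \<mu>)"
    "\<And>y. y \<in> W \<Longrightarrow> y (dom_rep R B \<mu>) = \<mu> \<Longrightarrow> len (vbar R B \<mu>) \<le> len y"
proof -
  define \<nu> where "\<nu> = dom_rep R B \<mu>"
  have n: "\<nu> \<in> DW" unfolding \<nu>_def by (rule dom_rep_props(1)[OF m])
  obtain x where x: "x \<in> W" "x \<mu> = \<nu>" using dom_rep_props(2)[OF m] unfolding \<nu>_def by blast
  have "winv x \<nu> = \<mu>" using winv_app(1)[OF x(1)] x(2) by metis
  then have P0: "winv x \<in> W \<and> winv x \<nu> = \<mu>" using winv(1)[OF x(1)] by blast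
  obtain y0 where y0: "y0 \<in> W \<and> y0 \<nu> = \<mu>" and y0m: "\<forall>y. y \<in> W \<and> y \<nu> = \<mu> \<longrightarrow> len y0 \<le> len y"
    using ex_has_least_nat[of "\<lambda>y. y \<in> W \<and> y \<nu> = \<mu>", OF P0, of len] by blast
  have my0: "minl \<nu> y0"
  proof (rule minimal_minl[OF n])
    show "y0 \<in> W" using y0 by blast
    fix y' assume "y' \<in> W" "y' \<nu> = y0 \<nu>"
    then show "len y0 \<le> len y'" using y0 y0m by simp
  qed
  have Qu: "w = y0" if a: "w \<in> W \<and> w \<nu> = \<mu> \<and> (\<forall>w'\<in>W. w' \<nu> = \<mu> \<longrightarrow> len w \<le> len w')" for w
  proof -
    have w: "w \<in> W" "w \<nu> = \<mu>" using a by blast+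
    have wm: "\<forall>w'\<in>W. w' \<nu> = \<mu> \<longrightarrow> len w \<le> len w'" using a by blast
    have "minl \<nu> w"
    proof (rule minimal_minl[OF n w(1)])
      fix y' assume "y' \<in> W" "y' \<nu> = w \<nu>"
      then show "len w \<le> len y'" using wm w(2) by simp
    qed
    moreover have "w \<nu> = y0 \<nu>" using w(2) y0 by simp
    ultimately show ?thesis using minl_unique[OF n w(1) _ _ _ my0] y0 by simp
  qed
  have Qy0: "y0 \<in> W \<and> y0 \<nu> = \<mu> \<and> (\<forall>w'\<in>W. w' \<nu> = \<mu> \<longrightarrow> len y0 \<le> len w')"
    using y0 y0m by simp
  have v: "vbar R B \<mu> = y0" unfolding vbar_def \<nu>_def[symmetric]
  proof (rule the_equality)
    show "y0 \<in> W \<and> y0 \<nu> = \<mu> \<and> (\<forall>w'\<in>W. w' \<nu> = \<mu> \<longrightarrow> len y0 \<le> len w')" by (rule Qy0)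
  next
    fix w assume "w \<in> W \<and> w \<nu> = \<mu> \<and> (\<forall>w'\<in>W. w' \<nu> = \<mu> \<longrightarrow> len w \<le> len w')"
    then show "w = y0" by (rule Qu)
  qed
  have e: "dom_rep R B \<mu> = \<nu>" by (simp add: \<nu>_def)
  show "vbar R B \<mu> \<in> W" using v y0 by simp
  show "vbar R B \<mu> (dom_rep R B \<mu>) = \<mu>" unfolding e v using y0 by simp
  show "minl (dom_rep R B \<mu>) (vbar R B \<mu>)" unfolding e v by (rule my0)
  show "\<And>y. y \<in> W \<Longrightarrow> y (dom_rep R B \<mu>) = \<mu> \<Longrightarrow> len (vbar R B \<mu>) \<le> len y"
    unfolding e v using y0m by simp
qed

lemma vbar_eq: assumes m: "\<mu> \<in> weights R" and x: "x \<in> W" and e: "x (dom_rep R B \<mu>) = \<mu>"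
  and mx: "minl (dom_rep R B \<mu>) x" shows "vbar R B \<mu> = x"
  by (rule minl_unique[OF dom_rep_props(1)[OF m] vbar_props(1)[OF m] x _ vbar_props(3)[OF m] mx])
    (simp add: vbar_props(2)[OF m] e)

end


context rsys begin

lemma coef_image: assumes x: "x \<in> W" shows "coef \<delta>0 (x \<gamma>) = (\<Sum>\<delta>\<in>B. coef \<delta> \<gamma> * coef \<delta>0 (x \<delta>))"
proof -
  have "x \<gamma> = x (\<Sum>\<delta>\<in>B. coef \<delta> \<gamma> *\<^sub>R \<delta>)" using expansion[of \<gamma>] by (rule arg_cong)
  also have "\<dots> = (\<Sum>\<delta>\<in>B. coef \<delta> \<gamma> *\<^sub>R x \<delta>)" using W_linear[OF x] by (simp add: linear_sum linear_scale)
  finally have e: "x \<gamma> = (\<Sum>\<delta>\<in>B. coef \<delta> \<gamma> *\<^sub>R x \<delta>)" .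
  show ?thesis unfolding e by (simp add: coef_sum coef_scale)
qed

lemma single_coef: assumes d: "\<delta> \<in> B" and z: "\<And>\<delta>0. \<delta>0 \<in> B \<Longrightarrow> \<delta>0 \<noteq> \<delta> \<Longrightarrow> coef \<delta>0 x = 0"
  shows "x = coef \<delta> x *\<^sub>R \<delta>"
proof -
  have "x = (\<Sum>b\<in>B. coef b x *\<^sub>R b)" by (rule expansion)
  also have "\<dots> = (\<Sum>b\<in>B. (if b = \<delta> then coef \<delta> x *\<^sub>R \<delta> else 0))"
    using z by (intro sum.cong) auto
  also have "\<dots> = coef \<delta> x *\<^sub>R \<delta>" using d finB by (simp add: sum.delta')
  finally show ?thesis .
qed

lemma deodhar:
  assumes n: "\<nu> \<in> DW" and v: "v \<in> W" and mv: "minl \<nu> v" and d: "\<delta> \<in> B"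
    and lt: "len v < len (srefl \<delta> \<circ> v)" and z: "\<nu> \<bullet> winv v \<delta> = 0"
  shows "\<exists>\<delta>''\<in>B. \<nu> \<bullet> \<delta>'' = 0 \<and> srefl \<delta> \<circ> v = v \<circ> srefl \<delta>''"
proof -
  define \<gamma> where "\<gamma> = winv v \<delta>"
  have gP: "\<gamma> \<in> Pos" using len_left_gt_iff[OF v d] lt by (simp add: \<gamma>_def)
  have vg: "v \<gamma> = \<delta>" unfolding \<gamma>_def by (rule winv_app(2)[OF v])
  have z': "\<nu> \<bullet> \<gamma> = 0" using z by (simp add: \<gamma>_def)
  have cnn: "coef \<delta>1 \<gamma> \<ge> 0" if "\<delta>1 \<in> B" for \<delta>1 using gP that by (simp add: Pos_iff)
  have vpos: "v \<delta>1 \<in> Pos" if "\<delta>1 \<in> B" "coef \<delta>1 \<gamma> > 0" for \<delta>1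
  proof -
    have "\<nu> \<bullet> \<delta>1 = 0" by (rule perp_coef[OF n gP z' that(1,2)])
    then show ?thesis using mv that(1) by (simp add: minl_def)
  qed
  obtain \<delta>'' where d'': "\<delta>'' \<in> B" "coef \<delta>'' \<gamma> > 0" using Pos_coef_pos[OF gP] by blast
  have vd''P: "v \<delta>'' \<in> Pos" by (rule vpos[OF d''])
  have zero: "coef \<delta>0 (v \<delta>'') = 0" if d0: "\<delta>0 \<in> B" "\<delta>0 \<noteq> \<delta>" for \<delta>0
  proof -
    have terms: "coef \<delta>1 \<gamma> * coef \<delta>0 (v \<delta>1) \<ge> 0" if "\<delta>1 \<in> B" for \<delta>1
    proof (cases "coef \<delta>1 \<gamma> > 0")
      case True
      then have "coef \<delta>0 (v \<delta>1) \<ge> 0" using vpos[OF that True] d0(1) by (simp add: Pos_iff)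
      then show ?thesis using True by simp
    next
      case False
      then have "coef \<delta>1 \<gamma> = 0" using cnn[OF that] by simp
      then show ?thesis by simp
    qed
    have "coef \<delta>0 \<delta> = 0" using d0 d coef_B by simp
    then have "(\<Sum>\<delta>1\<in>B. coef \<delta>1 \<gamma> * coef \<delta>0 (v \<delta>1)) = 0" using coef_image[OF v, of \<delta>0 \<gamma>] vg by simp
    moreover have "(\<Sum>\<delta>1\<in>B. coef \<delta>1 \<gamma> * coef \<delta>0 (v \<delta>1)) = 0 \<longleftrightarrow> (\<forall>\<delta>1\<in>B. coef \<delta>1 \<gamma> * coef \<delta>0 (v \<delta>1) = 0)"
      by (rule sum_nonneg_eq_0_iff[OF finB]) (rule terms)
    ultimately have "coef \<delta>'' \<gamma> * coef \<delta>0 (v \<delta>'') = 0" using d''(1) by blast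
    then show ?thesis using d''(2) by simp
  qed
  have vd: "v \<delta>'' = coef \<delta> (v \<delta>'') *\<^sub>R \<delta>" by (rule single_coef[OF d zero]) auto
  have "coef \<delta> (v \<delta>'') \<noteq> 0"
  proof
    assume "coef \<delta> (v \<delta>'') = 0"
    then have "v \<delta>'' = 0" using vd by simp
    then show False using vd''P PosR zR by auto
  qed
  then have sr: "srefl (v \<delta>'') = srefl \<delta>" using vd srefl_scaleR_root by metis
  have "v \<circ> srefl \<delta>'' = srefl (v \<delta>'') \<circ> v" by (rule comp_srefl_as_left[OF v B_R[OF d''(1)]])
  then have "srefl \<delta> \<circ> v = v \<circ> srefl \<delta>''" using sr by simp
  moreover have "\<nu> \<bullet> \<delta>'' = 0" by (rule perp_coef[OF n gP z' d''])
  ultimately show ?thesis using d''(1) by blast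
qed

lemma simple_step:
  assumes lw: "lam \<in> weights R" and mw: "\<mu> \<in> weights R" and d: "\<delta> \<in> B"
    and fx: "srefl \<delta> lam = lam" and lt: "less_empty R B \<mu> lam"
  shows "less_empty R B (srefl \<delta> \<mu>) lam"
proof -
  define s where "s = srefl \<delta>"
  have dR: "\<delta> \<in> R" by (rule B_R[OF d])
  have sW: "s \<in> W" unfolding s_def by (rule W_srefl[OF dR])
  have smw: "s \<mu> \<in> weights R" unfolding s_def by (rule weights_srefl[OF mw dR])
  have dr: "dom_rep R B (s \<mu>) = dom_rep R B \<mu>" by (rule dom_rep_W[OF mw sW])
  have ss: "\<And>x. s (s x) = x" unfolding s_def by (rule srefl_invol_R[OF dR])
  have h1: "dom_le B (dom_rep R B \<mu>) (dom_rep R B lam)"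
    and h2: "dom_rep R B \<mu> = dom_rep R B lam \<longrightarrow> bruhat_le R B (vbar R B \<mu>) (vbar R B lam)"
    and h3: "\<mu> \<noteq> lam" using lt by (auto simp: less_empty_def le_empty_def)
  have ne: "s \<mu> \<noteq> lam"
  proof
    assume "s \<mu> = lam"
    then have "\<mu> = s lam" using ss by metis
    then show False using h3 fx by (simp add: s_def)
  qed
  have br_part: "bruhat_le R B (vbar R B (s \<mu>)) (vbar R B lam)" if eq: "dom_rep R B (s \<mu>) = dom_rep R B lam"
  proof -
    define \<nu> where "\<nu> = dom_rep R B \<mu>"
    have n: "\<nu> \<in> DW" unfolding \<nu>_def by (rule dom_rep_props(1)[OF mw])
    have nl: "dom_rep R B lam = \<nu>" using eq dr by (simp add: \<nu>_def)
    define u where "u = vbar R B \<mu>"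
    define v where "v = vbar R B lam"
    have uW: "u \<in> W" and un: "u \<nu> = \<mu>" and mu: "minl \<nu> u"
      using vbar_props[OF mw] by (simp_all add: u_def \<nu>_def)
    have vW: "v \<in> W" and vn: "v \<nu> = lam" and mv: "minl \<nu> v"
      and vmin: "\<And>y. y \<in> W \<Longrightarrow> y \<nu> = lam \<Longrightarrow> len v \<le> len y"
      using vbar_props[OF lw] nl by (simp_all add: v_def)
    have buv: "br u v" using h2 nl by (simp add: \<nu>_def u_def v_def bruhat_le_def)
    show ?thesis
    proof (cases "s \<mu> = \<mu>")
      case True
      then show ?thesis using h2 nl by (simp add: \<nu>_def)
    next
      case False
      have suW: "s \<circ> u \<in> W" by (rule W_comp[OF sW uW])
      have msu: "minl \<nu> (s \<circ> u)" unfolding minl_def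
      proof (intro ballI impI)
        fix \<delta>' assume d': "\<delta>' \<in> B" and z: "\<nu> \<bullet> \<delta>' = 0"
        have uP: "u \<delta>' \<in> Pos" using mu d' z by (simp add: minl_def)
        show "(s \<circ> u) \<delta>' \<in> Pos"
        proof (cases "\<exists>c. u \<delta>' = c *\<^sub>R \<delta>")
          case True
          then obtain c where c: "u \<delta>' = c *\<^sub>R \<delta>" by blast
          then have "c \<noteq> 0" using uP PosR zR by auto
          then have "srefl (u \<delta>') = s" using c srefl_scaleR_root by (simp add: s_def)
          moreover have "u \<circ> srefl \<delta>' = srefl (u \<delta>') \<circ> u" by (rule comp_srefl_as_left[OF uW B_R[OF d']])
          ultimately have "s \<circ> u = u \<circ> srefl \<delta>'" by simp
          then have "s \<mu> = u (srefl \<delta>' \<nu>)" using un by (metis comp_apply)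
          also have "srefl \<delta>' \<nu> = \<nu>" by (rule srefl_orth) (simp add: z)
          finally have "s \<mu> = \<mu>" using un by simp
          then show ?thesis using False by blast
        next
          case False
          then show ?thesis using key[OF uP d] by (simp add: s_def)
        qed
      qed
      have vsu: "vbar R B (s \<mu>) = s \<circ> u"
        by (rule vbar_eq[OF smw suW]) (use un dr msu in \<open>simp_all add: \<nu>_def\<close>)
      show ?thesis
      proof (cases "len (s \<circ> u) < len u")
        case True
        have "s \<circ> (s \<circ> u) = u" using ss by (simp add: fun_eq_iff)
        then have "bstep (s \<circ> u) u" using stepI[OF dR, of "s \<circ> u"] True by (simp add: s_def)
        then have "br (s \<circ> u) v" using buv by (rule converse_rtranclp_into_rtranclp)
        then show ?thesis using vsu suW vW by (simp add: bruhat_le_def v_def)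
      next
        case False
        then have lu: "len u < len (s \<circ> u)" using refl_len_ne_left[OF uW dR] by (simp add: s_def)
        have svW: "s \<circ> v \<in> W" by (rule W_comp[OF sW vW])
        have "(s \<circ> v) \<nu> = lam" using vn fx by (simp add: s_def)
        then have "len v \<le> len (s \<circ> v)" using vmin svW by blast
        then have lv: "len v < len (s \<circ> v)" using refl_len_ne_left[OF vW dR] by (simp add: s_def)
        have b1: "br (s \<circ> u) (s \<circ> v)" using Z_left[OF buv uW d] lv by (simp add: s_def)
        have ld: "lam \<bullet> \<delta> = 0"
        proof -
          have "srefl \<delta> lam - lam = 0" using fx by simp
          then have "(2 * (lam \<bullet> \<delta>) / (\<delta> \<bullet> \<delta>)) *\<^sub>R \<delta> = 0" by (simp add: srefl_def)
          then show ?thesis using B_nz[OF d] by simp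
        qed
        have "\<nu> \<bullet> winv v \<delta> = 0" using W_inner_winv[OF vW, of \<nu> \<delta>] vn ld by simp
        then obtain \<delta>'' where d'': "\<delta>'' \<in> B" "\<nu> \<bullet> \<delta>'' = 0" "s \<circ> v = v \<circ> srefl \<delta>''"
          using deodhar[OF n vW mv d] lv by (auto simp: s_def)
        have e: "(s \<circ> v) \<circ> srefl \<delta>'' = v" using d''(3) comp_srefl_srefl[OF B_R[OF d''(1)], of v] by simp
        have "len ((s \<circ> v) \<circ> srefl \<delta>'') < len (s \<circ> v)" using e lv by simp
        then have lr: "br (s \<circ> u) ((s \<circ> v) \<circ> srefl \<delta>'') \<or>
            (len ((s \<circ> u) \<circ> srefl \<delta>'') < len (s \<circ> u) \<and> br ((s \<circ> u) \<circ> srefl \<delta>'') ((s \<circ> v) \<circ> srefl \<delta>''))"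
          using lift_right[OF b1 suW d''(1)] by blast
        have "(s \<circ> u) \<delta>'' \<in> Pos" using msu d''(1,2) by (simp add: minl_def)
        then have "len (s \<circ> u) < len ((s \<circ> u) \<circ> srefl \<delta>'')" by (rule len_right_gt[OF suW d''(1)])
        then have "br (s \<circ> u) ((s \<circ> v) \<circ> srefl \<delta>'')" using lr by linarith
        then have "br (s \<circ> u) v" using e by simp
        then show ?thesis using vsu suW vW by (simp add: bruhat_le_def v_def)
      qed
    qed
  qed
  show ?thesis unfolding s_def[symmetric] less_empty_def le_empty_def
    using h1 dr br_part ne by simp
qed

end


context rsys begin

lemma gen_group_W: "I \<subseteq> S \<Longrightarrow> gen_group I \<subseteq> W"
  unfolding weyl_def using S_sub gen_group_mono by (metis order_trans)

lemma span_move: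
  assumes I: "I \<subseteq> S" and x: "x \<in> gen_group I"
  shows "x y - y \<in> span (par_simple B I)"
  using x
proof (induction x rule: gen_group.induct)
  case gen_id then show ?case by (simp add: span_zero)
next
  case (gen_step s x)
  obtain \<alpha> where a: "\<alpha> \<in> B" "s = srefl \<alpha>" using gen_step.hyps(1) I by (auto simp: simple_refls_def)
  have aJ: "\<alpha> \<in> par_simple B I" using a gen_step.hyps(1) by (simp add: par_simple_def)
  have "s (x y) - x y = - ((2 * (x y \<bullet> \<alpha>) / (\<alpha> \<bullet> \<alpha>)) *\<^sub>R \<alpha>)" by (simp add: a(2) srefl_def)
  also have "\<dots> \<in> span (par_simple B I)" using aJ by (intro span_neg span_scale span_base)
  finally have "s (x y) - x y \<in> span (par_simple B I)" .
  then have "(s (x y) - x y) + (x y - y) \<in> span (par_simple B I)" using gen_step.IH by (rule span_add)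
  then show ?case by simp
qed

lemma coef_span_zero: assumes "\<delta>0 \<in> B" "\<delta>0 \<notin> par_simple B I" "z \<in> span (par_simple B I)"
  shows "coef \<delta>0 z = 0"
proof -
  have "orthogonal (dual \<delta>0) z"
  proof (rule orthogonal_to_span[OF assms(3)])
    fix y assume y: "y \<in> par_simple B I"
    then have "y \<in> B" "y \<noteq> \<delta>0" using assms(2) by (auto simp: par_simple_def)
    then show "orthogonal (dual \<delta>0) y" using coef_B[of y \<delta>0] by (simp add: orthogonal_def coef_def)
  qed
  then show ?thesis by (simp add: orthogonal_def coef_def)
qed

lemma I_descent:
  assumes I: "I \<subseteq> S" and w: "w \<in> gen_group I" and ne: "w \<noteq> id"
  shows "\<exists>\<delta>\<in>B. srefl \<delta> \<in> I \<and> winv w \<delta> \<notin> Pos"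
proof (rule ccontr)
  assume "\<not> ?thesis"
  then have hyp: "\<And>\<delta>. \<delta> \<in> B \<Longrightarrow> srefl \<delta> \<in> I \<Longrightarrow> winv w \<delta> \<in> Pos" by blast
  have wW: "w \<in> W" using gen_group_W[OF I] w by blast
  obtain ss where ss: "set ss \<subseteq> I" "w = wd ss" using w gen_group_wd by blast
  have "winv w = wd (rev ss)" using winv_wd ss I by auto
  then have vI: "winv w \<in> gen_group I" using ss(1) gen_group_wd by (metis set_rev)
  define v where "v = winv w"
  have vW: "v \<in> W" unfolding v_def by (rule winv(1)[OF wW])
  have "v \<gamma> \<in> Pos" if g: "\<gamma> \<in> Pos" for \<gamma>
  proof (cases "\<exists>\<delta>0\<in>B. \<delta>0 \<notin> par_simple B I \<and> coef \<delta>0 \<gamma> > 0")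
    case True
    then obtain \<delta>0 where d0: "\<delta>0 \<in> B" "\<delta>0 \<notin> par_simple B I" "coef \<delta>0 \<gamma> > 0" by blast
    have "coef \<delta>0 (v \<gamma> - \<gamma>) = 0"
      by (rule coef_span_zero[OF d0(1,2)]) (rule span_move[OF I vI[folded v_def]])
    then have "coef \<delta>0 (v \<gamma>) > 0" using d0(3) by (simp add: coef_diff)
    then show ?thesis using root_pos_coef[OF W_R[OF vW PosR[OF g]] d0(1)] by blast
  next
    case False
    have terms: "coef \<delta> \<gamma> * ht (v \<delta>) \<ge> 0 \<and> (coef \<delta> \<gamma> > 0 \<longrightarrow> coef \<delta> \<gamma> * ht (v \<delta>) > 0)" if d: "\<delta> \<in> B" for \<delta>
    proof (cases "coef \<delta> \<gamma> > 0")
      case True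
      then have "\<delta> \<in> par_simple B I" using False d by blast
      then have "srefl \<delta> \<in> I" by (simp add: par_simple_def)
      then have "v \<delta> \<in> Pos" using hyp d by (simp add: v_def)
      then have "ht (v \<delta>) > 0" by (rule ht_Pos)
      then show ?thesis using True by (simp add: mult_pos_pos less_imp_le)
    next
      case False
      have "coef \<delta> \<gamma> \<ge> 0" using g d by (simp add: Pos_iff)
      then have "coef \<delta> \<gamma> = 0" using False by simp
      then show ?thesis by simp
    qed
    obtain \<delta>0 where d0: "\<delta>0 \<in> B" "coef \<delta>0 \<gamma> > 0" using Pos_coef_pos[OF g] by blast
    have "(\<Sum>\<delta>\<in>B. coef \<delta> \<gamma> * ht (v \<delta>)) > 0"
    proof (rule sum_pos2[OF finB d0(1)])
      show "0 < coef \<delta>0 \<gamma> * ht (v \<delta>0)" using terms[OF d0(1)] d0(2) by blast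
    next
      fix i assume "i \<in> B" then show "0 \<le> coef i \<gamma> * ht (v i)" using terms by blast
    qed
    then have "ht (v \<gamma>) > 0" using ht_image[OF vW, of \<gamma>] by simp
    then show ?thesis using Pos_ht_iff[OF W_R[OF vW PosR[OF g]]] by simp
  qed
  then have "v = id" by (rule pos_pres_id[OF vW])
  then have "winv v = id" using winv_srefl[OF B_R] winv_winv by (simp add: winv_def)
  then have "w = id" using winv_winv[OF wW] by (simp add: v_def)
  then show False using ne by blast
qed

lemma main_induct:
  assumes I: "I \<subseteq> S" and lp: "lam \<in> par_dom_weights R B I"
    and mw: "\<mu> \<in> weights R" and lt: "less_empty R B \<mu> lam"
  shows "w \<in> gen_group I \<Longrightarrow> w lam = lam \<Longrightarrow> less_empty R B (w \<mu>) lam"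
proof (induction "len w" arbitrary: w rule: less_induct)
  case less
  have wW: "w \<in> W" using gen_group_W[OF I] less.prems(1) by blast
  have lw: "lam \<in> weights R" using lp by (simp add: par_dom_weights_def)
  show ?case
  proof (cases "w = id")
    case True then show ?thesis using lt by simp
  next
    case False
    obtain \<delta> where d: "\<delta> \<in> B" "srefl \<delta> \<in> I" "winv w \<delta> \<notin> Pos"
      using I_descent[OF I less.prems(1) False] by blast
    have dR: "\<delta> \<in> R" by (rule B_R[OF d(1)])
    define \<epsilon> where "\<epsilon> = - winv w \<delta>"
    have eP: "\<epsilon> \<in> Pos" unfolding \<epsilon>_def using neg_Pos_iff[OF W_R[OF winv(1)[OF wW] dR]] d(3) by simp
    have dJ: "\<delta> \<in> par_simple B I" using d by (simp add: par_simple_def)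
    have wiI: "winv w \<in> gen_group I"
    proof -
      obtain ss where ss: "set ss \<subseteq> I" "w = wd ss" using less.prems(1) gen_group_wd by blast
      have "winv w = wd (rev ss)" using winv_wd ss I by auto
      then show ?thesis using ss(1) gen_group_wd by (metis set_rev)
    qed
    have "winv w \<delta> - \<delta> \<in> span (par_simple B I)" by (rule span_move[OF I wiI])
    moreover have "\<delta> \<in> span (par_simple B I)" using dJ by (rule span_base)
    ultimately have "winv w \<delta> \<in> span (par_simple B I)" using span_add by fastforce
    then have "\<epsilon> \<in> span (par_simple B I)" unfolding \<epsilon>_def by (rule span_neg)
    then have "\<epsilon> \<in> par_pos_roots R B I" using eP by (simp add: par_pos_roots_def)
    then have le1: "lam \<bullet> \<epsilon> \<ge> 0" using lp by (simp add: par_dom_weights_def)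
    have "\<delta> \<in> par_pos_roots R B I" using B_Pos[OF d(1)] dJ span_base by (auto simp: par_pos_roots_def)
    then have le2: "lam \<bullet> \<delta> \<ge> 0" using lp by (simp add: par_dom_weights_def)
    have "lam \<bullet> \<delta> = w lam \<bullet> \<delta>" using less.prems(2) by simp
    also have "\<dots> = lam \<bullet> winv w \<delta>" by (rule W_inner_winv[OF wW])
    also have "\<dots> = - (lam \<bullet> \<epsilon>)" by (simp add: \<epsilon>_def)
    finally have "lam \<bullet> \<delta> = 0" using le1 le2 by simp
    then have fx: "srefl \<delta> lam = lam" by (rule srefl_orth)
    define w' where "w' = srefl \<delta> \<circ> w"
    have w'I: "w' \<in> gen_group I" unfolding w'_def by (rule gen_group.gen_step[OF d(2) less.prems(1)])
    have w'l: "w' lam = lam" using less.prems(2) fx by (simp add: w'_def)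
    have llt: "len w' < len w" unfolding w'_def using len_left_lt_iff[OF wW d(1)] d(3) by blast
    have IH: "less_empty R B (w' \<mu>) lam" by (rule less.hyps[OF llt w'I w'l])
    have w'W: "w' \<in> W" using gen_group_W[OF I] w'I by blast
    have "less_empty R B (srefl \<delta> (w' \<mu>)) lam"
      by (rule simple_step[OF lw W_weights[OF w'W mw] d(1) fx IH])
    moreover have "srefl \<delta> (w' \<mu>) = w \<mu>" unfolding w'_def using srefl_invol_R[OF dR] by simp
    ultimately show ?thesis by simp
  qed
qed

end

theorem mainTheorem4:
  fixes R B :: "'a::euclidean_space set" and I :: "('a \<Rightarrow> 'a) set"
    and lam \<mu> :: 'a and w :: "'a \<Rightarrow> 'a"
  assumes "root_system R" and "is_base R B"
    and "I \<subseteq> simple_refls B"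
    and "lam \<in> par_dom_weights R B I" and "\<mu> \<in> weights R"
    and "less_empty R B \<mu> lam"
    and "w \<in> par_stab I lam"
  shows "less_empty R B (w \<mu>) lam"
proof -
  interpret rsys R B using assms(1,2) by (rule rsys.intro)
  show ?thesis using main_induct[OF assms(3,4,5,6)] assms(7) by (simp add: par_stab_def)
qed


end
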